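(* Let $\mathfrak{X}=\mathfrak{X}_{(\Gamma_q,i_q)_q}$ be a Bourgain–Delbaen space, let $\Gamma'$ be a self-determined subset of $\Gamma$, let $\mathfrak{X}'=\mathfrak{X}_{(\Gamma'_{q_s},i'_{q_s})_s}$ be the Bourgain–Delbaen space determined by $\Gamma'$ (as described in the context), and let $Y$ be the closed linear span of $\{d_\gamma:\gamma\in\Gamma\setminus\Gamma'\}$. Then the restriction map $R:\ell_\infty(\Gamma)\to\ell_\infty(\Gamma')$ maps $\mathfrak{X}$ onto $\mathfrak{X}'$ and the kernel of $R|_{\mathfrak{X}}$ is $Y$. Hence $\mathfrak{X}/Y$ is isomorphic to $\mathfrak{X}'$.
   Context: Bourgain–Delbaen spaces: given a strictly increasing sequence $(\Gamma_q)_q$ of non-empty finite sets with union $\Gamma$ and linear extension operators $i_q:\ell_\infty(\Gamma_q)\to\ell_\infty(\Gamma)$ ($i_q(x)|_{\Gamma_q}=x$) with $\sup_q\|i_q\|<\infty$ that are compatible (for $p<q$, $i_p=i_q\circ r_q\circ i_p$, with $r_q$ restriction onto $\Gamma_q$), set $\Delta_1=\Gamma_1$, $\Delta_{q+1}=\Gamma_{q+1}\setminus\Gamma_q$, $d_\gamma=i_q(e_\gamma)$ for $\gamma\in\Delta_q$; $\mathfrak{X}_{(\Gamma_q,i_q)_q}$ is the closed span of $\{d_\gamma\}$ in $\ell_\infty(\Gamma)$. $e_\gamma^*$ denotes evaluation at $\gamma$ restricted to the space, $(d_\gamma^* )$ the functionals biorthogonal to $(d_\gamma)$. An infinite subset $\Gamma'\subseteq\Gamma$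 is self-determined if each $d_\gamma^*$, $\gamma\in\Gamma'$, lies in the linear span of $\{e_\eta^*:\eta\in\Gamma'\}$. For such $\Gamma'$: write $\{q:\Gamma'\cap\Delta_q\neq\varnothing\}=\{q_0<q_1<\cdots\}$, $\Gamma'_q=\Gamma'\cap\Gamma_q$, $R$ = restriction onto $\Gamma'$, and $i'_{q_s}:\ell_\infty(\Gamma'_{q_s})\to\ell_\infty(\Gamma')$, $i'_{q_s}(x)=R(i_{q_s}(x))$ ($x$ extended by zero to $\Gamma_{q_s}$). The sequence $(i'_{q_s})_s$ is a uniformly bounded compatible sequence of extension operators, so it defines the Bourgain–Delbaen space $\mathfrak{X}_{(\Gamma'_{q_s},i'_{q_s})_s}\subseteq\ell_\infty(\Gamma')$. *)

theory Defs
  imports Complex_Main "HOL-Library.Infinite_Set"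
begin

text \<open>Elements of ell-infinity(A) are represented as real-valued functions on the
  ambient type that are bounded on A and vanish outside A.\<close>

definition linf :: "'g set \<Rightarrow> ('g \<Rightarrow> real) set" where
  "linf A = {f. bdd_above ((\<lambda>x. \<bar>f x\<bar>) ` A) \<and> (\<forall>x. x \<notin> A \<longrightarrow> f x = 0)}"

definition supnorm :: "'g set \<Rightarrow> ('g \<Rightarrow> real) \<Rightarrow> real" where
  "supnorm A f = Sup ((\<lambda>x. \<bar>f x\<bar>) ` A)"

definition restr :: "('g \<Rightarrow> real) \<Rightarrow> 'g set \<Rightarrow> ('g \<Rightarrow> real)" where
  "restr f A = (\<lambda>x. if x \<in> A then f x else 0)"

definition cspan :: "'g set \<Rightarrow> 'i set \<Rightarrow> ('i \<Rightarrow> 'g \<Rightarrow> real) \<Rightarrow> ('g \<Rightarrow> real) set" where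
  "cspan A J d = {f \<in> linf A. \<forall>e>0. \<exists>F c. finite F \<and> F \<subseteq> J \<and>
       supnorm A (\<lambda>x. f x - (\<Sum>i\<in>F. c i * d i x)) < e}"

definition Gam :: "(nat \<Rightarrow> 'g set) \<Rightarrow> 'g set" where
  "Gam G = (\<Union>q. G q)"

fun Delta :: "(nat \<Rightarrow> 'g set) \<Rightarrow> nat \<Rightarrow> 'g set" where
  "Delta G 0 = G 0"
| "Delta G (Suc q) = G (Suc q) - G q"

definition unitv :: "'g \<Rightarrow> 'g \<Rightarrow> real" where
  "unitv \<gamma> = (\<lambda>\<eta>. if \<eta> = \<gamma> then 1 else 0)"

text \<open>Bourgain--Delbaen data (indexing of the levels starts at 0)\<close>
definition bd_data :: "(nat \<Rightarrow> 'g set) \<Rightarrow> (nat \<Rightarrow> ('g \<Rightarrow> real) \<Rightarrow> ('g \<Rightarrow> real)) \<Rightarrow> bool" where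
  "bd_data G I \<longleftrightarrow>
     (\<forall>q. finite (G q) \<and> G q \<noteq> {}) \<and>
     (\<forall>q. G q \<subset> G (Suc q)) \<and>
     (\<forall>q. \<forall>x\<in>linf (G q). I q x \<in> linf (Gam G) \<and> restr (I q x) (G q) = x) \<and>
     (\<forall>q. \<forall>x\<in>linf (G q). \<forall>y\<in>linf (G q). \<forall>a b.
          I q (\<lambda>g. a * x g + b * y g) = (\<lambda>g. a * I q x g + b * I q y g)) \<and>
     (\<exists>C. \<forall>q. \<forall>x\<in>linf (G q). supnorm (Gam G) (I q x) \<le> C * supnorm (G q) x) \<and>
     (\<forall>p q. p < q \<longrightarrow> (\<forall>x\<in>linf (G p). I p x = I q (restr (I p x) (G q))))"

definition lvl :: "(nat \<Rightarrow> 'g set) \<Rightarrow> 'g \<Rightarrow> nat" where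
  "lvl G \<gamma> = (LEAST q. \<gamma> \<in> G q)"

definition bd_d :: "(nat \<Rightarrow> 'g set) \<Rightarrow> (nat \<Rightarrow> ('g \<Rightarrow> real) \<Rightarrow> ('g \<Rightarrow> real)) \<Rightarrow> 'g \<Rightarrow> 'g \<Rightarrow> real" where
  "bd_d G I \<gamma> = I (lvl G \<gamma>) (unitv \<gamma>)"

definition bd_space :: "(nat \<Rightarrow> 'g set) \<Rightarrow> (nat \<Rightarrow> ('g \<Rightarrow> real) \<Rightarrow> ('g \<Rightarrow> real)) \<Rightarrow> ('g \<Rightarrow> real) set" where
  "bd_space G I = cspan (Gam G) (Gam G) (bd_d G I)"

text \<open>Self-determined: d_gamma^* (gamma in Gamma') is a finite linear combination of the
  evaluation functionals e_eta^* (eta in Gamma'), restricted to the space.  Since the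
  d_eta span a dense subspace and all functionals involved are bounded, equality of
  functionals on the space is equality on every d_eta, where d_gamma^* is given by
  biorthogonality.\<close>
definition self_determined :: "(nat \<Rightarrow> 'g set) \<Rightarrow> (nat \<Rightarrow> ('g \<Rightarrow> real) \<Rightarrow> ('g \<Rightarrow> real)) \<Rightarrow> 'g set \<Rightarrow> bool" where
  "self_determined G I \<Gamma>' \<longleftrightarrow> infinite \<Gamma>' \<and> \<Gamma>' \<subseteq> Gam G \<and>
     (\<forall>\<gamma>\<in>\<Gamma>'. \<exists>F c. finite F \<and> F \<subseteq> \<Gamma>' \<and>
        (\<forall>\<eta>\<in>Gam G. (\<Sum>\<zeta>\<in>F. c \<zeta> * bd_d G I \<eta> \<zeta>) = (if \<eta> = \<gamma> then 1 else 0)))"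

definition sd_levels :: "(nat \<Rightarrow> 'g set) \<Rightarrow> 'g set \<Rightarrow> nat set" where
  "sd_levels G \<Gamma>' = {q. \<Gamma>' \<inter> Delta G q \<noteq> {}}"

definition sub_G :: "(nat \<Rightarrow> 'g set) \<Rightarrow> 'g set \<Rightarrow> nat \<Rightarrow> 'g set" where
  "sub_G G \<Gamma>' s = \<Gamma>' \<inter> G (enumerate (sd_levels G \<Gamma>') s)"

definition sub_I :: "(nat \<Rightarrow> 'g set) \<Rightarrow> (nat \<Rightarrow> ('g \<Rightarrow> real) \<Rightarrow> ('g \<Rightarrow> real)) \<Rightarrow> 'g set
                      \<Rightarrow> nat \<Rightarrow> ('g \<Rightarrow> real) \<Rightarrow> ('g \<Rightarrow> real)" where
  "sub_I G I \<Gamma>' s x = restr (I (enumerate (sd_levels G \<Gamma>') s) x) \<Gamma>'"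

end

theory Submission
  imports Defs
begin


abbreviation bddA :: "'g set \<Rightarrow> ('g \<Rightarrow> real) \<Rightarrow> bool" where
  "bddA A f \<equiv> bdd_above ((\<lambda>x. \<bar>f x\<bar>) ` A)"

lemma abs_le_supnorm: "bddA A f \<Longrightarrow> x \<in> A \<Longrightarrow> \<bar>f x\<bar> \<le> supnorm A f"
  unfolding supnorm_def by (rule cSUP_upper)

lemma supnorm_le: "A \<noteq> {} \<Longrightarrow> (\<And>x. x \<in> A \<Longrightarrow> \<bar>f x\<bar> \<le> M) \<Longrightarrow> supnorm A f \<le> M"
  unfolding supnorm_def by (rule cSUP_least)

lemma bdd_byI: "(\<And>x. x \<in> A \<Longrightarrow> \<bar>f x\<bar> \<le> M) \<Longrightarrow> bddA A f"
  by (rule bdd_aboveI2)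

lemma linf_bdd: "f \<in> linf A \<Longrightarrow> bddA A f" by (simp add: linf_def)
lemma linf_zero: "f \<in> linf A \<Longrightarrow> x \<notin> A \<Longrightarrow> f x = 0" by (simp add: linf_def)
lemma linfI: "(\<And>x. x \<in> A \<Longrightarrow> \<bar>f x\<bar> \<le> M) \<Longrightarrow> (\<And>x. x \<notin> A \<Longrightarrow> f x = 0) \<Longrightarrow> f \<in> linf A"
  unfolding linf_def using bdd_byI[of A f M] by simp
lemma linf_le: "f \<in> linf A \<Longrightarrow> x \<in> A \<Longrightarrow> \<bar>f x\<bar> \<le> supnorm A f"
  by (rule abs_le_supnorm[OF linf_bdd])

lemma supnorm_nonneg: "A \<noteq> {} \<Longrightarrow> bddA A f \<Longrightarrow> 0 \<le> supnorm A f"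
proof -
  assume "A \<noteq> {}" "bddA A f"
  then obtain x where "x \<in> A" by blast
  then show ?thesis using abs_le_supnorm[OF \<open>bddA A f\<close>, of x] by linarith
qed

lemma linf_lin: "f \<in> linf A \<Longrightarrow> g \<in> linf A \<Longrightarrow> (\<lambda>x. a * f x + b * g x) \<in> linf A"
proof -
  assume f: "f \<in> linf A" and g: "g \<in> linf A"
  show ?thesis
  proof (rule linfI)
    fix x assume "x \<in> A"
    have "\<bar>a * f x + b * g x\<bar> \<le> \<bar>a\<bar> * \<bar>f x\<bar> + \<bar>b\<bar> * \<bar>g x\<bar>"
      using abs_triangle_ineq[of "a * f x" "b * g x"] by (simp add: abs_mult)
    also have "\<dots> \<le> \<bar>a\<bar> * supnorm A f + \<bar>b\<bar> * supnorm A g"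
      using linf_le[OF f \<open>x\<in>A\<close>] linf_le[OF g \<open>x\<in>A\<close>]
      by (simp add: add_mono mult_left_mono)
    finally show "\<bar>a * f x + b * g x\<bar> \<le> \<bar>a\<bar> * supnorm A f + \<bar>b\<bar> * supnorm A g" .
  next
    fix x assume "x \<notin> A" then show "a * f x + b * g x = 0" using f g by (simp add: linf_zero)
  qed
qed

lemma linf_0: "(\<lambda>x. 0) \<in> linf A"
  by (rule linfI[of _ _ 0]) auto

lemma linf_diff: "f \<in> linf A \<Longrightarrow> g \<in> linf A \<Longrightarrow> (\<lambda>x. f x - g x) \<in> linf A"
  using linf_lin[of f A g 1 "-1"] by simp

lemma linf_add: "f \<in> linf A \<Longrightarrow> g \<in> linf A \<Longrightarrow> (\<lambda>x. f x + g x) \<in> linf A"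
  using linf_lin[of f A g 1 1] by simp

lemma linf_scale: "f \<in> linf A \<Longrightarrow> (\<lambda>x. a * f x) \<in> linf A"
  using linf_lin[of f A f a 0] by simp

lemma linf_sum: "finite S \<Longrightarrow> (\<And>i. i \<in> S \<Longrightarrow> f i \<in> linf A) \<Longrightarrow> (\<lambda>x. \<Sum>i\<in>S. c i * f i x) \<in> linf A"
proof (induction S rule: finite_induct)
  case empty then show ?case by (simp add: linf_0)
next
  case (insert a S)
  then have "(\<lambda>x. c a * f a x + 1 * (\<Sum>i\<in>S. c i * f i x)) \<in> linf A"
    by (intro linf_lin) auto
  then show ?case using insert by simp
qed

lemma linf_mono: "f \<in> linf A \<Longrightarrow> A \<subseteq> B \<Longrightarrow> f \<in> linf B"
proof -
  assume f: "f \<in> linf A" and AB: "A \<subseteq> B"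
  show ?thesis
  proof (rule linfI[of _ _ "max 0 (supnorm A f)"])
    fix x assume "x \<in> B"
    show "\<bar>f x\<bar> \<le> max 0 (supnorm A f)"
    proof (cases "x \<in> A")
      case True then show ?thesis using linf_le[OF f True] by linarith
    next
      case False
      then have "f x = 0" by (rule linf_zero[OF f])
      then show ?thesis by simp
    qed
  next
    fix x assume "x \<notin> B" then have "x \<notin> A" using AB by auto
    then show "f x = 0" by (rule linf_zero[OF f])
  qed
qed

lemma linf_restr: "f \<in> linf A \<Longrightarrow> B \<subseteq> A \<Longrightarrow> restr f B \<in> linf B"
proof -
  assume f: "f \<in> linf A" and BA: "B \<subseteq> A"
  show ?thesis
  proof (rule linfI[of _ _ "supnorm A f"])
    fix x assume "x \<in> B" then show "\<bar>restr f B x\<bar> \<le> supnorm A f"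
      using linf_le[OF f] BA by (auto simp: restr_def)
  qed (simp add: restr_def)
qed

lemma supnorm_cong: "(\<And>x. x \<in> A \<Longrightarrow> f x = g x) \<Longrightarrow> supnorm A f = supnorm A g"
  unfolding supnorm_def by (rule arg_cong[where f=Sup], rule image_cong) auto

lemma supnorm_triangle:
  assumes "A \<noteq> {}" "bddA A f" "bddA A g"
  shows "supnorm A (\<lambda>x. f x + g x) \<le> supnorm A f + supnorm A g"
proof (rule supnorm_le[OF assms(1)])
  fix x assume "x \<in> A"
  have "\<bar>f x + g x\<bar> \<le> \<bar>f x\<bar> + \<bar>g x\<bar>" by (rule abs_triangle_ineq)
  also have "\<dots> \<le> supnorm A f + supnorm A g"
    using abs_le_supnorm[OF assms(2) \<open>x\<in>A\<close>] abs_le_supnorm[OF assms(3) \<open>x\<in>A\<close>] by simp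
  finally show "\<bar>f x + g x\<bar> \<le> supnorm A f + supnorm A g" .
qed

lemma supnorm_mono_set:
  assumes "B \<subseteq> A" "B \<noteq> {}" "bddA A f"
  shows "supnorm B f \<le> supnorm A f"
proof (rule supnorm_le[OF assms(2)])
  fix x assume "x \<in> B"
  then show "\<bar>f x\<bar> \<le> supnorm A f" using assms(1) abs_le_supnorm[OF assms(3)] by blast
qed

lemma supnorm_minus: "supnorm A (\<lambda>x. g x - f x) = supnorm A (\<lambda>x. f x - g x)"
  unfolding supnorm_def by (simp add: abs_minus_commute)




locale bdl =
  fixes G :: "nat \<Rightarrow> 'g set" and I :: "nat \<Rightarrow> ('g \<Rightarrow> real) \<Rightarrow> ('g \<Rightarrow> real)" and \<Gamma>' :: "'g set"
  assumes data: "bd_data G I" and sd: "self_determined G I \<Gamma>'"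
begin

abbreviation "\<Gamma> \<equiv> Gam G"
abbreviation "d \<equiv> bd_d G I"
abbreviation "lv \<equiv> lvl G"

lemmas D = data[unfolded bd_data_def]
lemma finG: "finite (G q)" using D[THEN conjunct1] by simp
lemma neG: "G q \<noteq> {}" using D[THEN conjunct1] by simp
lemma strictG: "G q \<subset> G (Suc q)" using D[THEN conjunct2, THEN conjunct1] by simp
lemma I_linf: "x \<in> linf (G q) \<Longrightarrow> I q x \<in> linf \<Gamma>"
  using D[THEN conjunct2, THEN conjunct2, THEN conjunct1] by simp
lemma I_restr: "x \<in> linf (G q) \<Longrightarrow> restr (I q x) (G q) = x"
  using D[THEN conjunct2, THEN conjunct2, THEN conjunct1] by simp
lemma I_lin: "x \<in> linf (G q) \<Longrightarrow> y \<in> linf (G q) \<Longrightarrow>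
   I q (\<lambda>g. a * x g + b * y g) = (\<lambda>g. a * I q x g + b * I q y g)"
  using D[THEN conjunct2, THEN conjunct2, THEN conjunct2, THEN conjunct1] by simp
lemma ex_bound: "\<exists>C. \<forall>q. \<forall>x\<in>linf (G q). supnorm \<Gamma> (I q x) \<le> C * supnorm (G q) x"
  using D[THEN conjunct2, THEN conjunct2, THEN conjunct2, THEN conjunct2, THEN conjunct1] by simp
lemma I_compat: "p < q \<Longrightarrow> x \<in> linf (G p) \<Longrightarrow> I p x = I q (restr (I p x) (G q))"
  using D[THEN conjunct2, THEN conjunct2, THEN conjunct2, THEN conjunct2, THEN conjunct2] by simp

lemmas SD = sd[unfolded self_determined_def]
lemma sd_inf: "infinite \<Gamma>'" using SD[THEN conjunct1] by simp
lemma sd_sub: "\<Gamma>' \<subseteq> \<Gamma>" using SD[THEN conjunct2, THEN conjunct1] by simp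
lemma sd_rep: "\<gamma> \<in> \<Gamma>' \<Longrightarrow> \<exists>F c. finite F \<and> F \<subseteq> \<Gamma>' \<and>
        (\<forall>\<eta>\<in>\<Gamma>. (\<Sum>\<zeta>\<in>F. c \<zeta> * d \<eta> \<zeta>) = (if \<eta> = \<gamma> then 1 else 0))"
  using SD[THEN conjunct2, THEN conjunct2] by simp

lemma monoG: "p \<le> q \<Longrightarrow> G p \<subseteq> G q"
  by (rule lift_Suc_mono_le[of G]) (use strictG in auto)

lemma G_sub: "G q \<subseteq> \<Gamma>" by (auto simp: Gam_def)
lemma Gam_ne: "\<Gamma> \<noteq> {}" using neG G_sub by blast

lemma lvl_in: "\<gamma> \<in> \<Gamma> \<Longrightarrow> \<gamma> \<in> G (lv \<gamma>)"
  unfolding lvl_def Gam_def by (auto intro: LeastI)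

lemma lvl_le: "\<gamma> \<in> G q \<Longrightarrow> lv \<gamma> \<le> q"
  unfolding lvl_def by (rule Least_le)

lemma in_G_iff: "\<gamma> \<in> \<Gamma> \<Longrightarrow> (\<gamma> \<in> G q) = (lv \<gamma> \<le> q)"
proof
  assume "\<gamma> \<in> G q" then show "lv \<gamma> \<le> q" by (rule lvl_le)
next
  assume g: "\<gamma> \<in> \<Gamma>" "lv \<gamma> \<le> q"
  show "\<gamma> \<in> G q" using monoG[OF g(2)] lvl_in[OF g(1)] by auto
qed

lemma unitv_linf: "\<gamma> \<in> G q \<Longrightarrow> unitv \<gamma> \<in> linf (G q)"
  by (rule linfI[of _ _ 1]) (auto simp: unitv_def)

lemma I_val: "x \<in> linf (G q) \<Longrightarrow> \<xi> \<in> G q \<Longrightarrow> I q x \<xi> = x \<xi>"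
  using fun_cong[OF I_restr, of x q \<xi>] by (simp add: restr_def)

lemma d_linf: "\<gamma> \<in> \<Gamma> \<Longrightarrow> d \<gamma> \<in> linf \<Gamma>"
  unfolding bd_d_def by (rule I_linf[OF unitv_linf[OF lvl_in]])

lemma d_low: "\<gamma> \<in> \<Gamma> \<Longrightarrow> \<xi> \<in> G (lv \<gamma>) \<Longrightarrow> d \<gamma> \<xi> = unitv \<gamma> \<xi>"
  unfolding bd_d_def by (rule I_val[OF unitv_linf[OF lvl_in]])

lemma d_self: "\<gamma> \<in> \<Gamma> \<Longrightarrow> d \<gamma> \<gamma> = 1"
  using d_low[OF _ lvl_in] by (simp add: unitv_def)

lemma d_out: "\<gamma> \<in> \<Gamma> \<Longrightarrow> \<xi> \<notin> \<Gamma> \<Longrightarrow> d \<gamma> \<xi> = 0"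
  by (rule linf_zero[OF d_linf])

lemma d_tri: "\<gamma> \<in> \<Gamma> \<Longrightarrow> d \<gamma> \<xi> \<noteq> 0 \<Longrightarrow> \<xi> = \<gamma> \<or> (\<xi> \<in> \<Gamma> \<and> lv \<gamma> < lv \<xi>)"
proof -
  assume g: "\<gamma> \<in> \<Gamma>" and nz: "d \<gamma> \<xi> \<noteq> 0"
  have xi: "\<xi> \<in> \<Gamma>" using d_out[OF g, of \<xi>] nz by auto
  show ?thesis
  proof (cases "\<xi> \<in> G (lv \<gamma>)")
    case True then show ?thesis using d_low[OF g True] nz by (simp add: unitv_def split: if_splits)
  next
    case False then have "\<not> lv \<xi> \<le> lv \<gamma>" using in_G_iff[OF xi, of "lv \<gamma>"] by simp
    then show ?thesis using xi by simp
  qed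
qed

lemma d_zero_low: "\<gamma> \<in> \<Gamma> \<Longrightarrow> \<xi> \<in> \<Gamma> \<Longrightarrow> \<xi> \<noteq> \<gamma> \<Longrightarrow> lv \<xi> \<le> lv \<gamma> \<Longrightarrow> d \<gamma> \<xi> = 0"
proof (rule ccontr)
  assume "\<gamma> \<in> \<Gamma>" "\<xi> \<in> \<Gamma>" "\<xi> \<noteq> \<gamma>" "lv \<xi> \<le> lv \<gamma>" "d \<gamma> \<xi> \<noteq> 0"
  then show False using d_tri[of \<gamma> \<xi>] by auto
qed

lemma I_zero: "I q (\<lambda>g. 0) = (\<lambda>g. 0)"
  using I_lin[OF linf_0 linf_0, of q 0 0] by simp

lemma I_sum: "finite S \<Longrightarrow> (\<And>i. i \<in> S \<Longrightarrow> f i \<in> linf (G q)) \<Longrightarrow>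
   I q (\<lambda>g. \<Sum>i\<in>S. c i * f i g) = (\<lambda>g. \<Sum>i\<in>S. c i * I q (f i) g)"
proof (induction S rule: finite_induct)
  case empty then show ?case by (simp add: I_zero)
next
  case (insert a S)
  have l1: "f a \<in> linf (G q)" using insert by simp
  have l2: "(\<lambda>x. \<Sum>i\<in>S. c i * f i x) \<in> linf (G q)" using insert by (intro linf_sum) auto
  have "I q (\<lambda>g. c a * f a g + 1 * (\<Sum>i\<in>S. c i * f i g)) =
        (\<lambda>g. c a * I q (f a) g + 1 * I q (\<lambda>x. \<Sum>i\<in>S. c i * f i x) g)"
    by (rule I_lin[OF l1 l2])
  then show ?case using insert by simp
qed

lemma I_diff: "x \<in> linf (G q) \<Longrightarrow> y \<in> linf (G q) \<Longrightarrow> I q (\<lambda>g. x g - y g) = (\<lambda>g. I q x g - I q y g)"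
  using I_lin[of x q y 1 "-1"] by simp

lemma I_add: "x \<in> linf (G q) \<Longrightarrow> y \<in> linf (G q) \<Longrightarrow> I q (\<lambda>g. x g + y g) = (\<lambda>g. I q x g + I q y g)"
  using I_lin[of x q y 1 1] by simp

definition CC where "CC = max 1 (SOME C. \<forall>q. \<forall>x\<in>linf (G q). supnorm \<Gamma> (I q x) \<le> C * supnorm (G q) x)"

lemma CC_ge1: "CC \<ge> 1" by (simp add: CC_def)

lemma I_bound: "x \<in> linf (G q) \<Longrightarrow> supnorm \<Gamma> (I q x) \<le> CC * supnorm (G q) x"
proof -
  assume x: "x \<in> linf (G q)"
  define C where "C = (SOME C. \<forall>q. \<forall>x\<in>linf (G q). supnorm \<Gamma> (I q x) \<le> C * supnorm (G q) x)"
  have "\<forall>q. \<forall>x\<in>linf (G q). supnorm \<Gamma> (I q x) \<le> C * supnorm (G q) x"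
    unfolding C_def by (rule someI_ex[OF ex_bound])
  then have 1: "supnorm \<Gamma> (I q x) \<le> C * supnorm (G q) x" using x by simp
  have 2: "0 \<le> supnorm (G q) x" by (rule supnorm_nonneg[OF neG linf_bdd[OF x]])
  have "C * supnorm (G q) x \<le> CC * supnorm (G q) x"
    unfolding CC_def C_def[symmetric] by (rule mult_right_mono[OF _ 2]) simp
  then show ?thesis using 1 by linarith
qed

definition lc :: "'g set \<Rightarrow> ('g \<Rightarrow> real) \<Rightarrow> 'g \<Rightarrow> real" where
  "lc F c = (\<lambda>g. \<Sum>\<xi>\<in>F. c \<xi> * d \<xi> g)"

lemma lc_linf: "finite F \<Longrightarrow> F \<subseteq> \<Gamma> \<Longrightarrow> lc F c \<in> linf \<Gamma>"
  unfolding lc_def by (rule linf_sum) (use d_linf in auto)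

end



lemma sum_swap_lin: "(\<Sum>\<xi>\<in>H. (\<Sum>\<gamma>\<in>S. (a \<gamma>::real) * b \<gamma> \<xi>) * e \<xi>) = (\<Sum>\<gamma>\<in>S. a \<gamma> * (\<Sum>\<xi>\<in>H. b \<gamma> \<xi> * e \<xi>))"
proof -
  have "(\<Sum>\<xi>\<in>H. (\<Sum>\<gamma>\<in>S. a \<gamma> * b \<gamma> \<xi>) * e \<xi>) = (\<Sum>\<xi>\<in>H. \<Sum>\<gamma>\<in>S. a \<gamma> * (b \<gamma> \<xi> * e \<xi>))"
    by (simp add: sum_distrib_right mult.assoc)
  also have "\<dots> = (\<Sum>\<gamma>\<in>S. \<Sum>\<xi>\<in>H. a \<gamma> * (b \<gamma> \<xi> * e \<xi>))" by (rule sum.swap)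
  also have "\<dots> = (\<Sum>\<gamma>\<in>S. a \<gamma> * (\<Sum>\<xi>\<in>H. b \<gamma> \<xi> * e \<xi>))" by (simp add: sum_distrib_left)
  finally show ?thesis .
qed

lemma sum_unitv: "finite H \<Longrightarrow> z \<in> H \<Longrightarrow> (\<Sum>\<xi>\<in>H. unitv z \<xi> * f \<xi>) = f z"
proof -
  assume "finite H" "z \<in> H"
  have "(\<Sum>\<xi>\<in>H. unitv z \<xi> * f \<xi>) = (\<Sum>\<xi>\<in>H. if \<xi> = z then f \<xi> else 0)"
    by (rule sum.cong) (auto simp: unitv_def)
  also have "\<dots> = f z" using \<open>finite H\<close> \<open>z \<in> H\<close> by (simp add: sum.delta')
  finally show ?thesis .
qed

lemma sum_restrict_sub: "finite H \<Longrightarrow> A \<subseteq> H \<Longrightarrow> (\<Sum>\<xi>\<in>H. (if \<xi> \<in> A then f \<xi> else 0)) = (\<Sum>\<xi>\<in>A. f \<xi>)"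
  by (simp add: sum.inter_restrict[symmetric] Int_absorb1)

lemma sum_delta_gen: "finite S \<Longrightarrow> (\<Sum>\<gamma>\<in>S. a \<gamma> * (if \<eta> = \<gamma> then 1 else 0)) = (if \<eta> \<in> S then a \<eta> else (0::real))"
  by (simp add: sum.delta[of S \<eta> a] if_distrib cong: if_cong)

context bdl begin

lemma inj_tri:
  assumes H: "finite H" "H \<subseteq> \<Gamma>'" and V: "\<And>\<eta>. \<eta> \<in> \<Gamma>' \<Longrightarrow> (\<Sum>\<xi>\<in>H. V \<xi> * d \<eta> \<xi>) = 0"
  shows "\<xi> \<in> H \<Longrightarrow> V \<xi> = 0"
proof (rule ccontr)
  assume xi: "\<xi> \<in> H" and nz: "V \<xi> \<noteq> 0"
  define H0 where "H0 = {\<xi>\<in>H. V \<xi> \<noteq> 0}"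
  have fin0: "finite H0" using H by (simp add: H0_def)
  have ne0: "H0 \<noteq> {}" using xi nz by (auto simp: H0_def)
  define m where "m = Max (lv ` H0)"
  have "m \<in> lv ` H0" unfolding m_def using fin0 ne0 by (intro Max_in) auto
  then obtain \<eta> where eta: "\<eta> \<in> H0" "lv \<eta> = m" by blast
  have etaH: "\<eta> \<in> H" and etaV: "V \<eta> \<noteq> 0" using eta by (auto simp: H0_def)
  have etaG: "\<eta> \<in> \<Gamma>" using etaH H sd_sub by blast
  have "(\<Sum>\<xi>\<in>H. V \<xi> * d \<eta> \<xi>) = V \<eta> * d \<eta> \<eta> + (\<Sum>\<xi>\<in>H - {\<eta>}. V \<xi> * d \<eta> \<xi>)"
    using H(1) etaH by (simp add: sum.remove)
  also have "(\<Sum>\<xi>\<in>H - {\<eta>}. V \<xi> * d \<eta> \<xi>) = 0"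
  proof (rule sum.neutral, rule ballI)
    fix x assume x: "x \<in> H - {\<eta>}"
    show "V x * d \<eta> x = 0"
    proof (cases "V x = 0")
      case False
      then have "x \<in> H0" using x by (simp add: H0_def)
      then have "lv x \<le> m" unfolding m_def using fin0 by simp
      moreover have "x \<in> \<Gamma>" using x H sd_sub by blast
      ultimately have "d \<eta> x = 0" using d_zero_low[OF etaG, of x] x eta(2) by auto
      then show ?thesis by simp
    qed simp
  qed
  finally have "(\<Sum>\<xi>\<in>H. V \<xi> * d \<eta> \<xi>) = V \<eta>" using d_self[OF etaG] by simp
  moreover have "\<eta> \<in> \<Gamma>'" using etaH H by blast
  ultimately show False using V etaV by simp
qed

lemma K:
  assumes eta: "\<eta> \<in> \<Gamma>" "\<eta> \<notin> \<Gamma>'" and zeta: "\<zeta> \<in> \<Gamma>'"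
  shows "d \<eta> \<zeta> = 0"
proof -
  obtain Fs cs where Fc: "\<And>\<gamma>. \<gamma> \<in> \<Gamma>' \<Longrightarrow> finite (Fs \<gamma>) \<and> Fs \<gamma> \<subseteq> \<Gamma>' \<and>
        (\<forall>\<eta>\<in>\<Gamma>. (\<Sum>\<zeta>\<in>Fs \<gamma>. cs \<gamma> \<zeta> * d \<eta> \<zeta>) = (if \<eta> = \<gamma> then 1 else 0))"
    using sd_rep by metis
  have zG: "\<zeta> \<in> \<Gamma>" using zeta sd_sub by blast
  define S where "S = \<Gamma>' \<inter> G (lv \<zeta>)"
  have finS: "finite S" using finG by (simp add: S_def)
  have zS: "\<zeta> \<in> S" using zeta lvl_in[OF zG] by (simp add: S_def)
  define H where "H = insert \<zeta> (\<Union>\<gamma>\<in>S. Fs \<gamma>)"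
  have finH: "finite H" unfolding H_def using finS Fc S_def by auto
  have HG: "H \<subseteq> \<Gamma>'" unfolding H_def using zeta Fc S_def by auto
  define cs' where "cs' \<gamma> \<xi> = (if \<xi> \<in> Fs \<gamma> then cs \<gamma> \<xi> else 0)" for \<gamma> \<xi>
  define V where "V \<xi> = (\<Sum>\<gamma>\<in>S. d \<gamma> \<zeta> * cs' \<gamma> \<xi>) - unitv \<zeta> \<xi>" for \<xi>
  have rep: "(\<Sum>\<xi>\<in>H. cs' \<gamma> \<xi> * d e \<xi>) = (if e = \<gamma> then 1 else 0)" if "\<gamma> \<in> S" "e \<in> \<Gamma>" for \<gamma> e
  proof -
    have sub: "Fs \<gamma> \<subseteq> H" using that unfolding H_def by auto
    have "(\<Sum>\<xi>\<in>H. cs' \<gamma> \<xi> * d e \<xi>) = (\<Sum>\<xi>\<in>H. if \<xi> \<in> Fs \<gamma> then cs \<gamma> \<xi> * d e \<xi> else 0)"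
      by (rule sum.cong) (auto simp: cs'_def)
    also have "\<dots> = (\<Sum>\<xi>\<in>Fs \<gamma>. cs \<gamma> \<xi> * d e \<xi>)" by (rule sum_restrict_sub[OF finH sub])
    also have "\<dots> = (if e = \<gamma> then 1 else 0)" using Fc[of \<gamma>] that S_def by auto
    finally show ?thesis .
  qed
  have LV: "(\<Sum>\<xi>\<in>H. V \<xi> * d e \<xi>) = (if e \<in> S then d e \<zeta> else 0) - d e \<zeta>" if e: "e \<in> \<Gamma>" for e
  proof -
    have "(\<Sum>\<xi>\<in>H. V \<xi> * d e \<xi>) = (\<Sum>\<xi>\<in>H. (\<Sum>\<gamma>\<in>S. d \<gamma> \<zeta> * cs' \<gamma> \<xi>) * d e \<xi>) - (\<Sum>\<xi>\<in>H. unitv \<zeta> \<xi> * d e \<xi>)"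
      by (simp add: V_def left_diff_distrib sum_subtractf)
    also have "(\<Sum>\<xi>\<in>H. (\<Sum>\<gamma>\<in>S. d \<gamma> \<zeta> * cs' \<gamma> \<xi>) * d e \<xi>) = (\<Sum>\<gamma>\<in>S. d \<gamma> \<zeta> * (\<Sum>\<xi>\<in>H. cs' \<gamma> \<xi> * d e \<xi>))"
      by (rule sum_swap_lin)
    also have "\<dots> = (\<Sum>\<gamma>\<in>S. d \<gamma> \<zeta> * (if e = \<gamma> then 1 else 0))"
      by (rule sum.cong) (use rep e in auto)
    also have "\<dots> = (if e \<in> S then d e \<zeta> else 0)" by (rule sum_delta_gen[OF finS])
    also have "(\<Sum>\<xi>\<in>H. unitv \<zeta> \<xi> * d e \<xi>) = d e \<zeta>"
      using finH by (rule sum_unitv) (simp add: H_def)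
    finally show ?thesis .
  qed
  have V0: "V \<xi> = 0" if "\<xi> \<in> H" for \<xi>
  proof (rule inj_tri[OF finH HG _ that])
    fix e assume e: "e \<in> \<Gamma>'"
    then have eG: "e \<in> \<Gamma>" using sd_sub by blast
    show "(\<Sum>\<xi>\<in>H. V \<xi> * d e \<xi>) = 0"
    proof (cases "e \<in> S")
      case True then show ?thesis using LV[OF eG] by simp
    next
      case False
      then have "e \<notin> G (lv \<zeta>)" using e by (simp add: S_def)
      then have "\<not> lv e \<le> lv \<zeta>" using in_G_iff[OF eG] by simp
      moreover have "\<zeta> \<noteq> e" using False zS by blast
      ultimately have "d e \<zeta> = 0" using d_zero_low[OF eG zG] by simp
      then show ?thesis using LV[OF eG] by simp
    qed
  qed
  have "(\<Sum>\<xi>\<in>H. V \<xi> * d \<eta> \<xi>) = 0" using V0 by simp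
  moreover have "\<eta> \<notin> S" using eta by (simp add: S_def)
  ultimately show ?thesis using LV[OF eta(1)] by simp
qed

end



context bdl begin

lemma rep_mono:
  assumes r: "\<forall>\<eta>\<in>\<Gamma>. (\<Sum>\<xi>\<in>\<Gamma>' \<inter> G p. c \<xi> * d \<eta> \<xi>) = v \<eta>" and pq: "p \<le> q"
  shows "\<exists>c'. \<forall>\<eta>\<in>\<Gamma>. (\<Sum>\<xi>\<in>\<Gamma>' \<inter> G q. c' \<xi> * d \<eta> \<xi>) = v \<eta>"
proof (intro exI ballI)
  fix \<eta> assume e: "\<eta> \<in> \<Gamma>"
  have sub: "\<Gamma>' \<inter> G p \<subseteq> \<Gamma>' \<inter> G q" using monoG[OF pq] by auto
  have fin: "finite (\<Gamma>' \<inter> G q)" using finG by simp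
  have "(\<Sum>\<xi>\<in>\<Gamma>' \<inter> G q. (if \<xi> \<in> G p then c \<xi> else 0) * d \<eta> \<xi>) =
        (\<Sum>\<xi>\<in>\<Gamma>' \<inter> G q. if \<xi> \<in> \<Gamma>' \<inter> G p then c \<xi> * d \<eta> \<xi> else 0)"
    by (rule sum.cong) auto
  also have "\<dots> = (\<Sum>\<xi>\<in>\<Gamma>' \<inter> G p. c \<xi> * d \<eta> \<xi>)" by (rule sum_restrict_sub[OF fin sub])
  also have "\<dots> = v \<eta>" using r e by blast
  finally show "(\<Sum>\<xi>\<in>\<Gamma>' \<inter> G q. (if \<xi> \<in> G p then c \<xi> else 0) * d \<eta> \<xi>) = v \<eta>" .
qed

lemma SDp:
  "\<gamma> \<in> \<Gamma>' \<Longrightarrow> \<exists>c. \<forall>\<eta>\<in>\<Gamma>. (\<Sum>\<xi>\<in>\<Gamma>' \<inter> G (lv \<gamma>). c \<xi> * d \<eta> \<xi>) = (if \<eta> = \<gamma> then 1 else 0)"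
proof (induction "lv \<gamma>" arbitrary: \<gamma> rule: less_induct)
  case less
  define q where "q = lv \<gamma>"
  have gG: "\<gamma> \<in> \<Gamma>" using less.prems sd_sub by blast
  define S where "S = \<Gamma>' \<inter> G q"
  define T where "T = S - {\<gamma>}"
  have finS: "finite S" using finG by (simp add: S_def)
  have finT: "finite T" using finS by (simp add: T_def)
  have gS: "\<gamma> \<in> S" using less.prems lvl_in[OF gG] by (simp add: S_def q_def)
  have "\<forall>\<gamma>'\<in>T. \<exists>c. lv \<gamma>' < q \<longrightarrow> (\<forall>\<eta>\<in>\<Gamma>. (\<Sum>\<xi>\<in>S. c \<xi> * d \<eta> \<xi>) = (if \<eta> = \<gamma>' then 1 else 0))"
  proof
    fix \<gamma>' assume g': "\<gamma>' \<in> T"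
    show "\<exists>c. lv \<gamma>' < q \<longrightarrow> (\<forall>\<eta>\<in>\<Gamma>. (\<Sum>\<xi>\<in>S. c \<xi> * d \<eta> \<xi>) = (if \<eta> = \<gamma>' then 1 else 0))"
    proof (cases "lv \<gamma>' < q")
      case True
      have "\<gamma>' \<in> \<Gamma>'" using g' by (simp add: T_def S_def)
      then obtain c where "\<forall>\<eta>\<in>\<Gamma>. (\<Sum>\<xi>\<in>\<Gamma>' \<inter> G (lv \<gamma>'). c \<xi> * d \<eta> \<xi>) = (if \<eta> = \<gamma>' then 1 else 0)"
        using less.hyps True q_def by blast
      from rep_mono[OF this, of q] True obtain c' where
        "\<forall>\<eta>\<in>\<Gamma>. (\<Sum>\<xi>\<in>S. c' \<xi> * d \<eta> \<xi>) = (if \<eta> = \<gamma>' then 1 else 0)"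
        unfolding S_def by auto
      then show ?thesis by blast
    qed simp
  qed
  from bchoice[OF this] obtain cc where cc: "\<forall>\<gamma>'\<in>T. lv \<gamma>' < q \<longrightarrow>
      (\<forall>\<eta>\<in>\<Gamma>. (\<Sum>\<xi>\<in>S. cc \<gamma>' \<xi> * d \<eta> \<xi>) = (if \<eta> = \<gamma>' then 1 else 0))" ..
  define c where "c \<xi> = unitv \<gamma> \<xi> - (\<Sum>\<gamma>'\<in>T. d \<gamma>' \<gamma> * cc \<gamma>' \<xi>)" for \<xi>
  have "\<forall>\<eta>\<in>\<Gamma>. (\<Sum>\<xi>\<in>S. c \<xi> * d \<eta> \<xi>) = (if \<eta> = \<gamma> then 1 else 0)"
  proof
    fix \<eta> assume eG: "\<eta> \<in> \<Gamma>"
    have "(\<Sum>\<xi>\<in>S. c \<xi> * d \<eta> \<xi>) = (\<Sum>\<xi>\<in>S. unitv \<gamma> \<xi> * d \<eta> \<xi>) - (\<Sum>\<xi>\<in>S. (\<Sum>\<gamma>'\<in>T. d \<gamma>' \<gamma> * cc \<gamma>' \<xi>) * d \<eta> \<xi>)"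
      by (simp add: c_def left_diff_distrib sum_subtractf)
    also have "(\<Sum>\<xi>\<in>S. unitv \<gamma> \<xi> * d \<eta> \<xi>) = d \<eta> \<gamma>" by (rule sum_unitv[OF finS gS])
    also have "(\<Sum>\<xi>\<in>S. (\<Sum>\<gamma>'\<in>T. d \<gamma>' \<gamma> * cc \<gamma>' \<xi>) * d \<eta> \<xi>) = (\<Sum>\<gamma>'\<in>T. d \<gamma>' \<gamma> * (\<Sum>\<xi>\<in>S. cc \<gamma>' \<xi> * d \<eta> \<xi>))"
      by (rule sum_swap_lin)
    also have "\<dots> = (\<Sum>\<gamma>'\<in>T. d \<gamma>' \<gamma> * (if \<eta> = \<gamma>' then 1 else 0))"
    proof (rule sum.cong[OF refl])
      fix \<gamma>' assume g': "\<gamma>' \<in> T"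
      show "d \<gamma>' \<gamma> * (\<Sum>\<xi>\<in>S. cc \<gamma>' \<xi> * d \<eta> \<xi>) = d \<gamma>' \<gamma> * (if \<eta> = \<gamma>' then 1 else 0)"
      proof (cases "lv \<gamma>' < q")
        case True then show ?thesis using cc g' True eG by simp
      next
        case False
        have g'G: "\<gamma>' \<in> \<Gamma>" and "\<gamma>' \<in> G q" "\<gamma>' \<noteq> \<gamma>" using g' sd_sub by (auto simp: T_def S_def)
        then have "lv \<gamma>' \<le> q" using lvl_le by blast
        then have "lv \<gamma> \<le> lv \<gamma>'" using False q_def by simp
        then have "d \<gamma>' \<gamma> = 0" using d_zero_low[OF g'G gG] \<open>\<gamma>' \<noteq> \<gamma>\<close> by simp
        then show ?thesis by simp
      qed
    qed
    also have "\<dots> = (if \<eta> \<in> T then d \<eta> \<gamma> else 0)" by (rule sum_delta_gen[OF finT])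
    finally have eq: "(\<Sum>\<xi>\<in>S. c \<xi> * d \<eta> \<xi>) = d \<eta> \<gamma> - (if \<eta> \<in> T then d \<eta> \<gamma> else 0)" .
    show "(\<Sum>\<xi>\<in>S. c \<xi> * d \<eta> \<xi>) = (if \<eta> = \<gamma> then 1 else 0)"
    proof (cases "\<eta> = \<gamma>")
      case True then show ?thesis using eq d_self[OF gG] by (simp add: T_def)
    next
      case ne: False
      show ?thesis
      proof (cases "\<eta> \<in> T")
        case True then show ?thesis using eq ne by simp
      next
        case nT: False
        have "d \<eta> \<gamma> = 0"
        proof (cases "\<eta> \<in> \<Gamma>'")
          case False show ?thesis by (rule K[OF eG False less.prems])
        next
          case True
          then have "\<eta> \<notin> G q" using nT ne by (simp add: T_def S_def)
          then have "\<not> lv \<eta> \<le> q" using in_G_iff[OF eG] by simp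
          then have "lv \<gamma> \<le> lv \<eta>" using q_def by simp
          then show ?thesis using d_zero_low[OF eG gG] ne by simp
        qed
        then show ?thesis using eq ne nT by simp
      qed
    qed
  qed
  then show ?case unfolding S_def q_def by blast
qed

lemma SDq: "\<gamma> \<in> \<Gamma>' \<Longrightarrow> \<gamma> \<in> G q \<Longrightarrow> \<exists>c. \<forall>\<eta>\<in>\<Gamma>. (\<Sum>\<xi>\<in>\<Gamma>' \<inter> G q. c \<xi> * d \<eta> \<xi>) = (if \<eta> = \<gamma> then 1 else 0)"
proof -
  assume g: "\<gamma> \<in> \<Gamma>'" "\<gamma> \<in> G q"
  obtain c where "\<forall>\<eta>\<in>\<Gamma>. (\<Sum>\<xi>\<in>\<Gamma>' \<inter> G (lv \<gamma>). c \<xi> * d \<eta> \<xi>) = (if \<eta> = \<gamma> then 1 else 0)"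
    using SDp[OF g(1)] by blast
  from rep_mono[OF this lvl_le[OF g(2)]] show ?thesis .
qed

end



lemma decomp: "finite A \<Longrightarrow> x \<in> linf A \<Longrightarrow> x = (\<lambda>g. \<Sum>\<xi>\<in>A. x \<xi> * unitv \<xi> g)"
proof (rule ext)
  fix g assume fin: "finite A" and x: "x \<in> linf A"
  show "x g = (\<Sum>\<xi>\<in>A. x \<xi> * unitv \<xi> g)"
  proof (cases "g \<in> A")
    case True
    have "(\<Sum>\<xi>\<in>A. x \<xi> * unitv \<xi> g) = (\<Sum>\<xi>\<in>A. if \<xi> = g then x \<xi> else 0)"
      by (rule sum.cong) (auto simp: unitv_def)
    also have "\<dots> = x g" using fin True by (simp add: sum.delta')
    finally show ?thesis by simp
  next
    case False
    then have "x g = 0" by (rule linf_zero[OF x])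
    moreover have "(\<Sum>\<xi>\<in>A. x \<xi> * unitv \<xi> g) = 0"
      by (rule sum.neutral) (use False in \<open>auto simp: unitv_def\<close>)
    ultimately show ?thesis by simp
  qed
qed

context bdl begin

lemma lc_union: "finite A \<Longrightarrow> finite B \<Longrightarrow> A \<inter> B = {} \<Longrightarrow>
  (\<lambda>g. lc A a g + lc B b g) = lc (A \<union> B) (\<lambda>\<xi>. if \<xi> \<in> A then a \<xi> else b \<xi>)"
proof (rule ext)
  fix g assume fA: "finite A" and fB: "finite B" and dis: "A \<inter> B = {}"
  have "lc (A \<union> B) (\<lambda>\<xi>. if \<xi> \<in> A then a \<xi> else b \<xi>) g
     = (\<Sum>\<xi>\<in>A. (if \<xi> \<in> A then a \<xi> else b \<xi>) * d \<xi> g) + (\<Sum>\<xi>\<in>B. (if \<xi> \<in> A then a \<xi> else b \<xi>) * d \<xi> g)"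
    unfolding lc_def by (rule sum.union_disjoint[OF fA fB dis])
  also have "(\<Sum>\<xi>\<in>A. (if \<xi> \<in> A then a \<xi> else b \<xi>) * d \<xi> g) = lc A a g"
    unfolding lc_def by (rule sum.cong) auto
  also have "(\<Sum>\<xi>\<in>B. (if \<xi> \<in> A then a \<xi> else b \<xi>) * d \<xi> g) = lc B b g"
    unfolding lc_def by (rule sum.cong) (use dis in auto)
  finally show "lc A a g + lc B b g = lc (A \<union> B) (\<lambda>\<xi>. if \<xi> \<in> A then a \<xi> else b \<xi>) g" by simp
qed

lemma lv_0: "\<xi> \<in> G 0 \<Longrightarrow> lv \<xi> = 0"
  using lvl_le[of \<xi> 0] by simp

lemma lv_Delta: "\<xi> \<in> G (Suc q) \<Longrightarrow> \<xi> \<notin> G q \<Longrightarrow> lv \<xi> = Suc q"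
proof -
  assume a: "\<xi> \<in> G (Suc q)" "\<xi> \<notin> G q"
  have xG: "\<xi> \<in> \<Gamma>" using a G_sub by blast
  have "lv \<xi> \<le> Suc q" by (rule lvl_le[OF a(1)])
  moreover have "\<not> lv \<xi> \<le> q" using a(2) in_G_iff[OF xG] by simp
  ultimately show ?thesis by simp
qed

lemma I_unitv: "\<xi> \<in> G q \<Longrightarrow> lv \<xi> = q \<Longrightarrow> I q (unitv \<xi>) = d \<xi>"
  by (simp add: bd_d_def)

lemma expand: "x \<in> linf (G q) \<Longrightarrow> \<exists>a. I q x = lc (G q) a"
proof (induction q arbitrary: x)
  case 0
  have "I 0 x = I 0 (\<lambda>g. \<Sum>\<xi>\<in>G 0. x \<xi> * unitv \<xi> g)"
    by (rule arg_cong[where f="I 0", OF decomp[OF finG 0]])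
  also have "\<dots> = (\<lambda>g. \<Sum>\<xi>\<in>G 0. x \<xi> * I 0 (unitv \<xi>) g)"
    by (rule I_sum[OF finG]) (rule unitv_linf)
  also have "\<dots> = lc (G 0) x"
    unfolding lc_def by (rule ext, rule sum.cong) (auto simp: I_unitv lv_0)
  finally show ?case by blast
next
  case (Suc q)
  have sub: "G q \<subseteq> G (Suc q)" using monoG by simp
  define x0 where "x0 = restr x (G q)"
  have x0: "x0 \<in> linf (G q)" unfolding x0_def by (rule linf_restr[OF Suc.prems sub])
  obtain a where a: "I q x0 = lc (G q) a" using Suc.IH[OF x0] by blast
  define v where "v = restr (I q x0) (G (Suc q))"
  have v: "v \<in> linf (G (Suc q))" unfolding v_def by (rule linf_restr[OF I_linf[OF x0] G_sub])
  have Iv: "I (Suc q) v = I q x0" unfolding v_def by (rule I_compat[symmetric]) (use x0 in auto)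
  define w where "w = (\<lambda>g. x g - v g)"
  have w: "w \<in> linf (G (Suc q))" unfolding w_def by (rule linf_diff[OF Suc.prems v])
  define Dl where "Dl = G (Suc q) - G q"
  have finD: "finite Dl" using finG by (simp add: Dl_def)
  have wD: "w \<in> linf Dl"
  proof (rule linfI[of _ _ "supnorm (G (Suc q)) w"])
    fix g assume "g \<in> Dl" then show "\<bar>w g\<bar> \<le> supnorm (G (Suc q)) w"
      using linf_le[OF w] by (auto simp: Dl_def)
  next
    fix g assume g: "g \<notin> Dl"
    show "w g = 0"
    proof (cases "g \<in> G q")
      case True
      then have "v g = I q x0 g" using sub by (auto simp: v_def restr_def)
      also have "\<dots> = x0 g" by (rule I_val[OF x0 True])
      also have "\<dots> = x g" using True by (simp add: x0_def restr_def)
      finally show ?thesis by (simp add: w_def)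
    next
      case False
      then have "g \<notin> G (Suc q)" using g by (simp add: Dl_def)
      then show ?thesis by (rule linf_zero[OF w])
    qed
  qed
  have xwv: "x = (\<lambda>g. w g + v g)" by (simp add: w_def)
  have "I (Suc q) x = (\<lambda>g. I (Suc q) w g + I (Suc q) v g)"
    unfolding xwv by (rule I_add[OF w v])
  also have "I (Suc q) w = I (Suc q) (\<lambda>g. \<Sum>\<xi>\<in>Dl. w \<xi> * unitv \<xi> g)"
    by (rule arg_cong[where f="I (Suc q)", OF decomp[OF finD wD]])
  also have "\<dots> = (\<lambda>g. \<Sum>\<xi>\<in>Dl. w \<xi> * I (Suc q) (unitv \<xi>) g)"
    by (rule I_sum[OF finD]) (rule unitv_linf, simp add: Dl_def)
  also have "\<dots> = lc Dl w"
    unfolding lc_def by (rule ext, rule sum.cong) (auto simp: Dl_def I_unitv lv_Delta)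
  also have "I (Suc q) v = lc (G q) a" using Iv a by simp
  also have "(\<lambda>g. lc Dl w g + lc (G q) a g) = (\<lambda>g. lc (G q) a g + lc Dl w g)" by (simp add: add.commute)
  also have "\<dots> = lc (G q \<union> Dl) (\<lambda>\<xi>. if \<xi> \<in> G q then a \<xi> else w \<xi>)"
    by (rule lc_union[OF finG finD]) (auto simp: Dl_def)
  also have "G q \<union> Dl = G (Suc q)" using sub by (auto simp: Dl_def)
  finally show ?case by blast
qed

lemma sum_swap2: "(\<Sum>\<xi>\<in>H. c \<xi> * (\<Sum>\<eta>\<in>S. a \<eta> * e \<eta> \<xi>)) = (\<Sum>\<eta>\<in>S. a \<eta> * (\<Sum>\<xi>\<in>H. c \<xi> * e \<eta> \<xi>))"
  for c a :: "_ \<Rightarrow> real"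
proof -
  have "(\<Sum>\<xi>\<in>H. c \<xi> * (\<Sum>\<eta>\<in>S. a \<eta> * e \<eta> \<xi>)) = (\<Sum>\<xi>\<in>H. \<Sum>\<eta>\<in>S. a \<eta> * (c \<xi> * e \<eta> \<xi>))"
    by (simp add: sum_distrib_left mult.left_commute)
  also have "\<dots> = (\<Sum>\<eta>\<in>S. \<Sum>\<xi>\<in>H. a \<eta> * (c \<xi> * e \<eta> \<xi>))" by (rule sum.swap)
  also have "\<dots> = (\<Sum>\<eta>\<in>S. a \<eta> * (\<Sum>\<xi>\<in>H. c \<xi> * e \<eta> \<xi>))" by (simp add: sum_distrib_left)
  finally show ?thesis .
qed

lemma AZ:
  assumes z: "z \<in> linf (G q)" and z0: "\<And>\<xi>. \<xi> \<in> \<Gamma>' \<Longrightarrow> z \<xi> = 0"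
  shows "\<exists>a. I q z = lc (G q - \<Gamma>') a"
proof -
  obtain a where a: "I q z = lc (G q) a" using expand[OF z] by blast
  have a0: "a \<gamma> = 0" if g: "\<gamma> \<in> \<Gamma>'" "\<gamma> \<in> G q" for \<gamma>
  proof -
    obtain c where c: "\<forall>\<eta>\<in>\<Gamma>. (\<Sum>\<xi>\<in>\<Gamma>' \<inter> G q. c \<xi> * d \<eta> \<xi>) = (if \<eta> = \<gamma> then 1 else 0)"
      using SDq[OF g] by blast
    have "(\<Sum>\<xi>\<in>\<Gamma>' \<inter> G q. c \<xi> * I q z \<xi>) = 0"
      by (rule sum.neutral) (use I_val[OF z] z0 in auto)
    moreover have "(\<Sum>\<xi>\<in>\<Gamma>' \<inter> G q. c \<xi> * I q z \<xi>) = (\<Sum>\<xi>\<in>\<Gamma>' \<inter> G q. c \<xi> * (\<Sum>\<eta>\<in>G q. a \<eta> * d \<eta> \<xi>))"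
      by (simp add: a lc_def)
    moreover have "\<dots> = (\<Sum>\<eta>\<in>G q. a \<eta> * (\<Sum>\<xi>\<in>\<Gamma>' \<inter> G q. c \<xi> * d \<eta> \<xi>))" by (rule sum_swap2)
    moreover have "\<dots> = (\<Sum>\<eta>\<in>G q. a \<eta> * (if \<eta> = \<gamma> then 1 else 0))"
    proof (rule sum.cong[OF refl])
      fix \<eta> assume "\<eta> \<in> G q"
      then have "\<eta> \<in> \<Gamma>" using G_sub by blast
      then show "a \<eta> * (\<Sum>\<xi>\<in>\<Gamma>' \<inter> G q. c \<xi> * d \<eta> \<xi>) = a \<eta> * (if \<eta> = \<gamma> then 1 else 0)"
        using c by simp
    qed
    moreover have "\<dots> = a \<gamma>"
    proof -
      have "(\<Sum>\<eta>\<in>G q. a \<eta> * (if \<eta> = \<gamma> then 1 else 0)) = (\<Sum>\<eta>\<in>G q. if \<eta> = \<gamma> then a \<eta> else 0)"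
        by (rule sum.cong) auto
      then show ?thesis using finG[of q] g by (simp add: sum.delta')
    qed
    ultimately show ?thesis by simp
  qed
  have "lc (G q) a = lc (G q - \<Gamma>') a"
  proof (rule ext)
    fix g
    show "lc (G q) a g = lc (G q - \<Gamma>') a g"
      unfolding lc_def by (rule sum.mono_neutral_right[OF finG]) (use a0 in auto)
  qed
  then show ?thesis using a by auto
qed

lemma RZ:
  assumes z: "z \<in> linf (G q)" and z0: "\<And>\<xi>. \<xi> \<in> \<Gamma>' \<Longrightarrow> z \<xi> = 0" and zeta: "\<zeta> \<in> \<Gamma>'"
  shows "I q z \<zeta> = 0"
proof -
  obtain a where a: "I q z = lc (G q - \<Gamma>') a" using AZ[OF z z0] by blast
  have "lc (G q - \<Gamma>') a \<zeta> = 0"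
    unfolding lc_def by (rule sum.neutral) (use K[OF _ _ zeta] G_sub in auto)
  then show ?thesis using a by simp
qed

end



context bdl begin

abbreviation "Y \<equiv> cspan \<Gamma> (\<Gamma> - \<Gamma>') d"

lemma fin_sub_G: "finite F \<Longrightarrow> F \<subseteq> \<Gamma> \<Longrightarrow> \<exists>q. F \<subseteq> G q"
proof (induction F rule: finite_induct)
  case empty then show ?case by blast
next
  case (insert a F)
  then obtain q where q: "F \<subseteq> G q" by auto
  have a: "a \<in> G (lv a)" using insert.prems lvl_in by auto
  have "F \<subseteq> G (max q (lv a))" using q monoG[of q "max q (lv a)"] by auto
  moreover have "a \<in> G (max q (lv a))" using a monoG[of "lv a" "max q (lv a)"] by auto
  ultimately show ?case by blast
qed

definition P where "P q x = I q (restr x (G q))"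

lemma restr_linfG: "x \<in> linf \<Gamma> \<Longrightarrow> restr x (G q) \<in> linf (G q)" by (rule linf_restr[OF _ G_sub])
lemma P_linf: "x \<in> linf \<Gamma> \<Longrightarrow> P q x \<in> linf \<Gamma>" unfolding P_def by (rule I_linf[OF restr_linfG])

lemma d_compat: "\<xi> \<in> \<Gamma> \<Longrightarrow> lv \<xi> \<le> q \<Longrightarrow> I q (restr (d \<xi>) (G q)) = d \<xi>"
proof -
  assume x: "\<xi> \<in> \<Gamma>" "lv \<xi> \<le> q"
  have u: "unitv \<xi> \<in> linf (G (lv \<xi>))" by (rule unitv_linf[OF lvl_in[OF x(1)]])
  show ?thesis
  proof (cases "lv \<xi> = q")
    case True
    have "restr (d \<xi>) (G q) = unitv \<xi>" unfolding bd_d_def using I_restr[OF u] True by simp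
    then show ?thesis using True by (simp add: bd_d_def)
  next
    case False then have "lv \<xi> < q" using x(2) by simp
    from I_compat[OF this u] show ?thesis by (simp add: bd_d_def)
  qed
qed

lemma P_lc: "finite F \<Longrightarrow> F \<subseteq> G q \<Longrightarrow> P q (lc F c) = lc F c"
proof -
  assume fin: "finite F" and FG: "F \<subseteq> G q"
  have FG': "\<xi> \<in> \<Gamma>" "lv \<xi> \<le> q" if "\<xi> \<in> F" for \<xi> using that FG G_sub lvl_le by blast+
  have "restr (lc F c) (G q) = (\<lambda>g. \<Sum>\<xi>\<in>F. c \<xi> * restr (d \<xi>) (G q) g)"
    by (rule ext) (simp add: restr_def lc_def)
  then have "P q (lc F c) = I q (\<lambda>g. \<Sum>\<xi>\<in>F. c \<xi> * restr (d \<xi>) (G q) g)" by (simp add: P_def)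
  also have "\<dots> = (\<lambda>g. \<Sum>\<xi>\<in>F. c \<xi> * I q (restr (d \<xi>) (G q)) g)"
    by (rule I_sum[OF fin], rule restr_linfG[OF d_linf[OF FG'(1)]])
  also have "\<dots> = lc F c" unfolding lc_def
    by (rule ext, rule sum.cong[OF refl]) (simp add: d_compat[OF FG'])
  finally show ?thesis .
qed

lemma P_diff: "x \<in> linf \<Gamma> \<Longrightarrow> y \<in> linf \<Gamma> \<Longrightarrow> P q (\<lambda>g. x g - y g) = (\<lambda>g. P q x g - P q y g)"
proof -
  assume x: "x \<in> linf \<Gamma>" and y: "y \<in> linf \<Gamma>"
  have "restr (\<lambda>g. x g - y g) (G q) = (\<lambda>g. restr x (G q) g - restr y (G q) g)"
    by (rule ext) (simp add: restr_def)
  then show ?thesis unfolding P_def using I_diff[OF restr_linfG[OF x] restr_linfG[OF y]] by simp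
qed

lemma P_bound: "x \<in> linf \<Gamma> \<Longrightarrow> supnorm \<Gamma> (P q x) \<le> CC * supnorm \<Gamma> x"
proof -
  assume x: "x \<in> linf \<Gamma>"
  have "supnorm \<Gamma> (P q x) \<le> CC * supnorm (G q) (restr x (G q))"
    unfolding P_def by (rule I_bound[OF restr_linfG[OF x]])
  also have "supnorm (G q) (restr x (G q)) = supnorm (G q) x"
    by (rule supnorm_cong) (simp add: restr_def)
  also have "supnorm (G q) x \<le> supnorm \<Gamma> x" by (rule supnorm_mono_set[OF G_sub neG linf_bdd[OF x]])
  then have "CC * supnorm (G q) x \<le> CC * supnorm \<Gamma> x" using CC_ge1 by (simp add: mult_left_mono)
  finally show ?thesis by simp
qed

lemma X_unfold: "x \<in> bd_space G I \<Longrightarrow> x \<in> linf \<Gamma> \<and> (\<forall>e>0. \<exists>F c. finite F \<and> F \<subseteq> \<Gamma> \<and> supnorm \<Gamma> (\<lambda>g. x g - lc F c g) < e)"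
  by (simp add: bd_space_def cspan_def lc_def)

lemma CONV:
  assumes x: "x \<in> bd_space G I" and e: "e > 0"
  shows "\<exists>q. supnorm \<Gamma> (\<lambda>g. x g - P q x g) < e"
proof -
  have xl: "x \<in> linf \<Gamma>" using X_unfold[OF x] by blast
  have "e / (1 + CC) > 0" using e CC_ge1 by simp
  then obtain F c where F: "finite F" "F \<subseteq> \<Gamma>" and s: "supnorm \<Gamma> (\<lambda>g. x g - lc F c g) < e / (1 + CC)"
    using X_unfold[OF x] by blast
  obtain q where q: "F \<subseteq> G q" using fin_sub_G[OF F] by blast
  define z where "z = lc F c"
  have zl: "z \<in> linf \<Gamma>" unfolding z_def by (rule lc_linf[OF F])
  have Pz: "P q z = z" unfolding z_def by (rule P_lc[OF F(1) q])
  have xz: "(\<lambda>g. x g - z g) \<in> linf \<Gamma>" by (rule linf_diff[OF xl zl])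
  have zx: "(\<lambda>g. z g - x g) \<in> linf \<Gamma>" by (rule linf_diff[OF zl xl])
  have eq: "(\<lambda>g. x g - P q x g) = (\<lambda>g. (x g - z g) + P q (\<lambda>g. z g - x g) g)"
    using P_diff[OF zl xl, of q] Pz by (simp add: fun_eq_iff)
  have t1: "supnorm \<Gamma> (\<lambda>g. x g - P q x g) \<le> supnorm \<Gamma> (\<lambda>g. x g - z g) + supnorm \<Gamma> (P q (\<lambda>g. z g - x g))"
    unfolding eq by (rule supnorm_triangle[OF Gam_ne linf_bdd[OF xz] linf_bdd[OF P_linf[OF zx]]])
  have t2: "supnorm \<Gamma> (P q (\<lambda>g. z g - x g)) \<le> CC * supnorm \<Gamma> (\<lambda>g. z g - x g)" by (rule P_bound[OF zx])
  have t3: "supnorm \<Gamma> (\<lambda>g. z g - x g) = supnorm \<Gamma> (\<lambda>g. x g - z g)" by (rule supnorm_minus)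
  have t4: "(1 + CC) * supnorm \<Gamma> (\<lambda>g. x g - z g) < (1 + CC) * (e / (1 + CC))"
    using s CC_ge1 z_def by (intro mult_strict_left_mono) auto
  have t5: "(1 + CC) * (e / (1 + CC)) = e" using CC_ge1 by simp
  have "supnorm \<Gamma> (\<lambda>g. x g - P q x g) < e"
    using t1 t2 t3 t4 t5 by (simp add: algebra_simps)
  then show ?thesis by blast
qed

lemma lc_cspan: "finite F \<Longrightarrow> F \<subseteq> J \<Longrightarrow> J \<subseteq> \<Gamma> \<Longrightarrow> lc F c \<in> cspan \<Gamma> J d"
proof -
  assume F: "finite F" "F \<subseteq> J" "J \<subseteq> \<Gamma>"
  have l: "lc F c \<in> linf \<Gamma>" using F by (intro lc_linf) auto
  have z: "supnorm \<Gamma> (\<lambda>x. lc F c x - (\<Sum>i\<in>F. c i * d i x)) \<le> 0"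
    by (rule supnorm_le[OF Gam_ne]) (simp add: lc_def)
  show ?thesis unfolding cspan_def
  proof (intro CollectI conjI allI impI l)
    fix e :: real assume "e > 0"
    then show "\<exists>Fa ca. finite Fa \<and> Fa \<subseteq> J \<and> supnorm \<Gamma> (\<lambda>x. lc F c x - (\<Sum>i\<in>Fa. ca i * d i x)) < e"
      using F z by (intro exI[of _ F] exI[of _ c]) auto
  qed
qed

lemma Y_sub_X: "x \<in> Y \<Longrightarrow> x \<in> bd_space G I"
proof -
  assume "x \<in> Y"
  then have x: "x \<in> linf \<Gamma>" and ap: "\<forall>e>0. \<exists>F c. finite F \<and> F \<subseteq> \<Gamma> - \<Gamma>' \<and>
       supnorm \<Gamma> (\<lambda>g. x g - (\<Sum>i\<in>F. c i * d i g)) < e" by (simp_all add: cspan_def)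
  show ?thesis unfolding bd_space_def cspan_def
  proof (intro CollectI conjI allI impI x)
    fix e :: real assume "e > 0"
    then obtain F c where "finite F" "F \<subseteq> \<Gamma> - \<Gamma>'" "supnorm \<Gamma> (\<lambda>g. x g - (\<Sum>i\<in>F. c i * d i g)) < e"
      using ap by blast
    then show "\<exists>F c. finite F \<and> F \<subseteq> \<Gamma> \<and> supnorm \<Gamma> (\<lambda>g. x g - (\<Sum>i\<in>F. c i * d i g)) < e"
      by (intro exI[of _ F] exI[of _ c]) auto
  qed
qed

lemma Y_ker: "x \<in> Y \<Longrightarrow> \<zeta> \<in> \<Gamma>' \<Longrightarrow> x \<zeta> = 0"
proof (rule ccontr)
  assume xY: "x \<in> Y" and z: "\<zeta> \<in> \<Gamma>'" and nz: "x \<zeta> \<noteq> 0"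
  have x: "x \<in> linf \<Gamma>" using xY by (simp add: cspan_def)
  have "\<bar>x \<zeta>\<bar> > 0" using nz by simp
  then obtain F c where F: "finite F" "F \<subseteq> \<Gamma> - \<Gamma>'" and s: "supnorm \<Gamma> (\<lambda>g. x g - lc F c g) < \<bar>x \<zeta>\<bar>"
    using xY unfolding cspan_def lc_def by blast
  have ll: "(\<lambda>g. x g - lc F c g) \<in> linf \<Gamma>" using F by (intro linf_diff[OF x] lc_linf) auto
  have zG: "\<zeta> \<in> \<Gamma>" using z sd_sub by blast
  have "lc F c \<zeta> = 0" unfolding lc_def
    by (rule sum.neutral, rule ballI) (use F K[OF _ _ z] in auto)
  then have "\<bar>x \<zeta>\<bar> \<le> supnorm \<Gamma> (\<lambda>g. x g - lc F c g)"
    using linf_le[OF ll zG] by simp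
  then show False using s by simp
qed

lemma ker_Y: "x \<in> bd_space G I \<Longrightarrow> (\<And>\<zeta>. \<zeta> \<in> \<Gamma>' \<Longrightarrow> x \<zeta> = 0) \<Longrightarrow> x \<in> Y"
proof -
  assume x: "x \<in> bd_space G I" and x0: "\<And>\<zeta>. \<zeta> \<in> \<Gamma>' \<Longrightarrow> x \<zeta> = 0"
  have xl: "x \<in> linf \<Gamma>" using X_unfold[OF x] by blast
  show ?thesis unfolding cspan_def
  proof (intro CollectI conjI allI impI xl)
    fix e :: real assume e: "e > 0"
    obtain q where q: "supnorm \<Gamma> (\<lambda>g. x g - P q x g) < e" using CONV[OF x e] by blast
    have z: "restr x (G q) \<in> linf (G q)" by (rule restr_linfG[OF xl])
    have z0: "\<And>\<xi>. \<xi> \<in> \<Gamma>' \<Longrightarrow> restr x (G q) \<xi> = 0" using x0 by (simp add: restr_def)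
    obtain a where a: "I q (restr x (G q)) = lc (G q - \<Gamma>') a"
      using AZ[OF z z0] by blast
    have "supnorm \<Gamma> (\<lambda>g. x g - (\<Sum>i\<in>G q - \<Gamma>'. a i * d i g)) < e"
      using q a by (simp add: P_def lc_def)
    moreover have "finite (G q - \<Gamma>')" using finG by simp
    moreover have "G q - \<Gamma>' \<subseteq> \<Gamma> - \<Gamma>'" using G_sub by blast
    ultimately show "\<exists>F c. finite F \<and> F \<subseteq> \<Gamma> - \<Gamma>' \<and> supnorm \<Gamma> (\<lambda>g. x g - (\<Sum>i\<in>F. c i * d i g)) < e"
      by blast
  qed
qed

lemma Gp_ne: "\<Gamma>' \<noteq> {}" using sd_inf by auto

lemma claim3: "\<exists>C>0. \<forall>x\<in>bd_space G I. \<exists>y\<in>Y. supnorm \<Gamma> (\<lambda>g. x g - y g) \<le> C * supnorm \<Gamma>' (restr x \<Gamma>')"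
proof (intro exI[of _ "1 + CC"] conjI ballI)
  show "1 + CC > 0" using CC_ge1 by simp
next
  fix x assume x: "x \<in> bd_space G I"
  have xl: "x \<in> linf \<Gamma>" using X_unfold[OF x] by blast
  define s where "s = supnorm \<Gamma>' (restr x \<Gamma>')"
  have Rl: "restr x \<Gamma>' \<in> linf \<Gamma>'" by (rule linf_restr[OF xl sd_sub])
  have s0: "0 \<le> s" unfolding s_def by (rule supnorm_nonneg[OF Gp_ne linf_bdd[OF Rl]])
  show "\<exists>y\<in>Y. supnorm \<Gamma> (\<lambda>g. x g - y g) \<le> (1 + CC) * supnorm \<Gamma>' (restr x \<Gamma>')"
  proof (cases "\<forall>\<zeta>\<in>\<Gamma>'. x \<zeta> = 0")
    case True
    then have xY: "x \<in> Y" using ker_Y[OF x] by blast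
    have "supnorm \<Gamma> (\<lambda>g. x g - x g) \<le> 0" by (rule supnorm_le[OF Gam_ne]) simp
    also have "0 \<le> (1 + CC) * s" using s0 CC_ge1 by simp
    finally show ?thesis using xY s_def by blast
  next
    case False
    then obtain \<zeta> where z: "\<zeta> \<in> \<Gamma>'" "x \<zeta> \<noteq> 0" by blast
    have "\<bar>restr x \<Gamma>' \<zeta>\<bar> \<le> s" unfolding s_def by (rule linf_le[OF Rl z(1)])
    then have spos: "s > 0" using z by (simp add: restr_def)
    obtain q where q: "supnorm \<Gamma> (\<lambda>g. x g - P q x g) < s" using CONV[OF x spos] by blast
    define z0 where "z0 = restr x (G q)"
    have z0l: "z0 \<in> linf (G q)" unfolding z0_def by (rule restr_linfG[OF xl])
    define z1 where "z1 = (\<lambda>g. if g \<in> \<Gamma>' then z0 g else 0)"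
    have z1l: "z1 \<in> linf (G q)"
    proof (rule linfI[of _ _ "supnorm (G q) z0"])
      fix g assume "g \<in> G q" then show "\<bar>z1 g\<bar> \<le> supnorm (G q) z0"
        using linf_le[OF z0l] supnorm_nonneg[OF neG linf_bdd[OF z0l]] by (auto simp: z1_def)
    next
      fix g assume "g \<notin> G q" then show "z1 g = 0" using linf_zero[OF z0l] by (simp add: z1_def)
    qed
    define z2 where "z2 = (\<lambda>g. z0 g - z1 g)"
    have z2l: "z2 \<in> linf (G q)" unfolding z2_def by (rule linf_diff[OF z0l z1l])
    obtain a where a: "I q z2 = lc (G q - \<Gamma>') a"
      using AZ[OF z2l] by (auto simp: z2_def z1_def)
    define y where "y = lc (G q - \<Gamma>') a"
    have yY: "y \<in> Y" unfolding y_def by (rule lc_cspan) (use finG G_sub in auto)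
    have "z0 = (\<lambda>g. z1 g + z2 g)" by (simp add: z2_def)
    then have "I q z0 = (\<lambda>g. I q z1 g + I q z2 g)" using I_add[OF z1l z2l] by simp
    then have Px: "P q x = (\<lambda>g. I q z1 g + y g)" using a by (simp add: P_def z0_def y_def)
    have I1: "I q z1 \<in> linf \<Gamma>" by (rule I_linf[OF z1l])
    have xP: "(\<lambda>g. x g - P q x g) \<in> linf \<Gamma>" by (rule linf_diff[OF xl P_linf[OF xl]])
    have eq: "(\<lambda>g. x g - y g) = (\<lambda>g. (x g - P q x g) + I q z1 g)" using Px by (simp add: fun_eq_iff)
    have n1: "supnorm (G q) z1 \<le> s"
    proof (rule supnorm_le[OF neG])
      fix g assume g: "g \<in> G q"
      show "\<bar>z1 g\<bar> \<le> s"
      proof (cases "g \<in> \<Gamma>'")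
        case True
        have "\<bar>restr x \<Gamma>' g\<bar> \<le> s" unfolding s_def by (rule linf_le[OF Rl True])
        then show ?thesis using True g by (simp add: z1_def z0_def restr_def)
      next
        case False then show ?thesis using s0 by (simp add: z1_def)
      qed
    qed
    have "supnorm \<Gamma> (\<lambda>g. x g - y g) \<le> supnorm \<Gamma> (\<lambda>g. x g - P q x g) + supnorm \<Gamma> (I q z1)"
      unfolding eq by (rule supnorm_triangle[OF Gam_ne linf_bdd[OF xP] linf_bdd[OF I1]])
    also have "supnorm \<Gamma> (I q z1) \<le> CC * supnorm (G q) z1" by (rule I_bound[OF z1l])
    also have "CC * supnorm (G q) z1 \<le> CC * s" using n1 CC_ge1 by (simp add: mult_left_mono)
    finally have "supnorm \<Gamma> (\<lambda>g. x g - y g) \<le> (1 + CC) * s" using q by (simp add: algebra_simps)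
    then show ?thesis using yY s_def by blast
  qed
qed

end



context bdl begin

abbreviation "L \<equiv> sd_levels G \<Gamma>'"
abbreviation "G' \<equiv> sub_G G \<Gamma>'"
abbreviation "I' \<equiv> sub_I G I \<Gamma>'"

lemma in_Delta: "\<gamma> \<in> \<Gamma> \<Longrightarrow> \<gamma> \<in> Delta G (lv \<gamma>)"
proof (cases "lv \<gamma>")
  case 0
  assume "\<gamma> \<in> \<Gamma>" then show ?thesis using lvl_in 0 by fastforce
next
  case (Suc p)
  assume g: "\<gamma> \<in> \<Gamma>"
  have "\<gamma> \<in> G (Suc p)" using lvl_in[OF g] Suc by simp
  moreover have "\<gamma> \<notin> G p" using in_G_iff[OF g, of p] Suc by simp
  ultimately show ?thesis using Suc by simp
qed

lemma lv_in_L: "\<gamma> \<in> \<Gamma>' \<Longrightarrow> lv \<gamma> \<in> L"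
  unfolding sd_levels_def using in_Delta sd_sub by blast

lemma L_inf: "infinite L"
proof
  assume fin: "finite L"
  have "\<Gamma>' \<subseteq> (\<Union>q\<in>L. G q)"
  proof
    fix \<gamma> assume g: "\<gamma> \<in> \<Gamma>'"
    then have "\<gamma> \<in> G (lv \<gamma>)" using lvl_in sd_sub by blast
    then show "\<gamma> \<in> (\<Union>q\<in>L. G q)" using lv_in_L[OF g] by blast
  qed
  moreover have "finite (\<Union>q\<in>L. G q)" using fin finG by blast
  ultimately show False using sd_inf finite_subset by blast
qed

lemma lvl_sub: "\<gamma> \<in> \<Gamma>' \<Longrightarrow> enumerate L (lvl G' \<gamma>) = lv \<gamma>"
proof -
  assume g: "\<gamma> \<in> \<Gamma>'"
  have gG: "\<gamma> \<in> \<Gamma>" using g sd_sub by blast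
  obtain s0 where s0: "enumerate L s0 = lv \<gamma>" using enumerate_Ex[OF L_inf lv_in_L[OF g]] by blast
  have "lvl G' \<gamma> = s0" unfolding lvl_def
  proof (rule Least_equality)
    show "\<gamma> \<in> G' s0" using g lvl_in[OF gG] s0 by (simp add: sub_G_def)
  next
    fix s assume "\<gamma> \<in> G' s"
    then have "\<gamma> \<in> G (enumerate L s)" by (simp add: sub_G_def)
    then have "lv \<gamma> \<le> enumerate L s" by (rule lvl_le)
    then have "enumerate L s0 \<le> enumerate L s" using s0 by simp
    then show "s0 \<le> s" using L_inf by simp
  qed
  then show ?thesis using s0 by simp
qed

lemma Gam_sub: "Gam G' = \<Gamma>'"
proof
  show "Gam G' \<subseteq> \<Gamma>'" by (auto simp: Gam_def sub_G_def)
next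
  show "\<Gamma>' \<subseteq> Gam G'"
  proof
    fix \<gamma> assume g: "\<gamma> \<in> \<Gamma>'"
    have gG: "\<gamma> \<in> \<Gamma>" using g sd_sub by blast
    obtain s0 where s0: "enumerate L s0 = lv \<gamma>" using enumerate_Ex[OF L_inf lv_in_L[OF g]] by blast
    have "\<gamma> \<in> G' s0" using g lvl_in[OF gG] s0 by (simp add: sub_G_def)
    then show "\<gamma> \<in> Gam G'" by (auto simp: Gam_def)
  qed
qed

lemma dsub: "\<gamma> \<in> \<Gamma>' \<Longrightarrow> bd_d G' I' \<gamma> = restr (d \<gamma>) \<Gamma>'"
  by (simp add: bd_d_def sub_I_def lvl_sub)

lemma lcR: "F \<subseteq> \<Gamma>' \<Longrightarrow> (\<lambda>g. \<Sum>\<xi>\<in>F. c \<xi> * bd_d G' I' \<xi> g) = restr (lc F c) \<Gamma>'"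
proof (rule ext)
  fix g assume F: "F \<subseteq> \<Gamma>'"
  have "(\<Sum>\<xi>\<in>F. c \<xi> * bd_d G' I' \<xi> g) = (\<Sum>\<xi>\<in>F. c \<xi> * restr (d \<xi>) \<Gamma>' g)"
    by (rule sum.cong[OF refl]) (use F dsub in auto)
  also have "\<dots> = restr (lc F c) \<Gamma>' g" by (simp add: restr_def lc_def)
  finally show "(\<Sum>\<xi>\<in>F. c \<xi> * bd_d G' I' \<xi> g) = restr (lc F c) \<Gamma>' g" .
qed

lemma Xsub_unfold: "bd_space G' I' = cspan \<Gamma>' \<Gamma>' (bd_d G' I')"
  by (simp add: bd_space_def Gam_sub)

lemma claim1a: "x \<in> bd_space G I \<Longrightarrow> restr x \<Gamma>' \<in> bd_space G' I'"
proof -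
  assume x: "x \<in> bd_space G I"
  have xl: "x \<in> linf \<Gamma>" using X_unfold[OF x] by blast
  have Rl: "restr x \<Gamma>' \<in> linf \<Gamma>'" by (rule linf_restr[OF xl sd_sub])
  show ?thesis unfolding Xsub_unfold cspan_def
  proof (intro CollectI conjI allI impI Rl)
    fix e :: real assume e: "e > 0"
    obtain F c where F: "finite F" "F \<subseteq> \<Gamma>" and s: "supnorm \<Gamma> (\<lambda>g. x g - lc F c g) < e"
      using X_unfold[OF x] e by blast
    define F' where "F' = F \<inter> \<Gamma>'"
    have F': "finite F'" "F' \<subseteq> \<Gamma>'" using F by (auto simp: F'_def)
    have dl: "(\<lambda>g. x g - lc F c g) \<in> linf \<Gamma>" by (rule linf_diff[OF xl lc_linf[OF F]])
    have "supnorm \<Gamma>' (\<lambda>g. restr x \<Gamma>' g - (\<Sum>\<xi>\<in>F'. c \<xi> * bd_d G' I' \<xi> g))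
        = supnorm \<Gamma>' (\<lambda>g. x g - lc F c g)"
    proof (rule supnorm_cong)
      fix g assume g: "g \<in> \<Gamma>'"
      have "lc F c g = lc F' c g" unfolding lc_def F'_def
        by (rule sum.mono_neutral_right[OF F(1)]) (use F K[OF _ _ g] in auto)
      then show "restr x \<Gamma>' g - (\<Sum>\<xi>\<in>F'. c \<xi> * bd_d G' I' \<xi> g) = x g - lc F c g"
        using lcR[OF F'(2), of c] g by (simp add: restr_def fun_eq_iff)
    qed
    also have "\<dots> \<le> supnorm \<Gamma> (\<lambda>g. x g - lc F c g)"
      by (rule supnorm_mono_set[OF sd_sub Gp_ne linf_bdd[OF dl]])
    finally show "\<exists>F c. finite F \<and> F \<subseteq> \<Gamma>' \<and>
        supnorm \<Gamma>' (\<lambda>g. restr x \<Gamma>' g - (\<Sum>i\<in>F. c i * bd_d G' I' i g)) < e"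
      using F' s by (intro exI[of _ F'] exI[of _ c]) auto
  qed
qed

end



context bdl begin

definition FS where "FS = {w. \<exists>F c. finite F \<and> F \<subseteq> \<Gamma> \<and> w = lc F c}"

lemma FS_linf: "w \<in> FS \<Longrightarrow> w \<in> linf \<Gamma>"
  unfolding FS_def using lc_linf by auto

lemma lc_ext: "finite H \<Longrightarrow> F \<subseteq> H \<Longrightarrow> lc F c = lc H (\<lambda>\<xi>. if \<xi> \<in> F then c \<xi> else 0)"
proof (rule ext)
  fix g assume H: "finite H" "F \<subseteq> H"
  have "lc H (\<lambda>\<xi>. if \<xi> \<in> F then c \<xi> else 0) g = (\<Sum>\<xi>\<in>H. if \<xi> \<in> F then c \<xi> * d \<xi> g else 0)"
    unfolding lc_def by (rule sum.cong) auto
  also have "\<dots> = lc F c g" unfolding lc_def by (rule sum_restrict_sub[OF H])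
  finally show "lc F c g = lc H (\<lambda>\<xi>. if \<xi> \<in> F then c \<xi> else 0) g" by simp
qed

lemma FS_lin: "w1 \<in> FS \<Longrightarrow> w2 \<in> FS \<Longrightarrow> (\<lambda>g. w1 g + b * w2 g) \<in> FS"
proof -
  assume "w1 \<in> FS" "w2 \<in> FS"
  then obtain F1 c1 F2 c2 where F: "finite F1" "F1 \<subseteq> \<Gamma>" "w1 = lc F1 c1" "finite F2" "F2 \<subseteq> \<Gamma>" "w2 = lc F2 c2"
    unfolding FS_def by blast
  define H where "H = F1 \<union> F2"
  have H: "finite H" "H \<subseteq> \<Gamma>" using F by (auto simp: H_def)
  define a1 where "a1 = (\<lambda>\<xi>. if \<xi> \<in> F1 then c1 \<xi> else 0)"
  define a2 where "a2 = (\<lambda>\<xi>. if \<xi> \<in> F2 then c2 \<xi> else 0)"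
  have "w1 = lc H a1" unfolding a1_def F(3) by (rule lc_ext[OF H(1)]) (simp add: H_def)
  moreover have "w2 = lc H a2" unfolding a2_def F(6) by (rule lc_ext[OF H(1)]) (simp add: H_def)
  ultimately have "(\<lambda>g. w1 g + b * w2 g) = lc H (\<lambda>\<xi>. a1 \<xi> + b * a2 \<xi>)"

  proof -
    assume e1: "w1 = lc H a1" and e2: "w2 = lc H a2"
    show ?thesis unfolding e1 e2 lc_def
      by (rule ext) (simp add: sum.distrib sum_distrib_left distrib_right mult.assoc)
  qed
  then show ?thesis unfolding FS_def using H by (intro CollectI exI[of _ H] exI[of _ "\<lambda>\<xi>. a1 \<xi> + b * a2 \<xi>"]) simp
qed

lemma FS_add: "w1 \<in> FS \<Longrightarrow> w2 \<in> FS \<Longrightarrow> (\<lambda>g. w1 g + w2 g) \<in> FS"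
  using FS_lin[of w1 w2 1] by simp

lemma FS_diff: "w1 \<in> FS \<Longrightarrow> w2 \<in> FS \<Longrightarrow> (\<lambda>g. w1 g - w2 g) \<in> FS"
  using FS_lin[of w1 w2 "-1"] by simp

lemma LIFT:
  assumes w: "w \<in> FS"
  shows "\<exists>u. u \<in> FS \<and> (\<forall>g\<in>\<Gamma>'. u g = w g) \<and> supnorm \<Gamma> u \<le> CC * supnorm \<Gamma>' (restr w \<Gamma>')"
proof -
  obtain F c where F: "finite F" "F \<subseteq> \<Gamma>" and wF: "w = lc F c" using w unfolding FS_def by blast
  obtain q where q: "F \<subseteq> G q" using fin_sub_G[OF F] by blast
  have wl: "w \<in> linf \<Gamma>" by (rule FS_linf[OF w])
  define s where "s = supnorm \<Gamma>' (restr w \<Gamma>')"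
  have Rl: "restr w \<Gamma>' \<in> linf \<Gamma>'" by (rule linf_restr[OF wl sd_sub])
  have s0: "0 \<le> s" unfolding s_def by (rule supnorm_nonneg[OF Gp_ne linf_bdd[OF Rl]])
  define z0 where "z0 = restr w (G q)"
  have z0l: "z0 \<in> linf (G q)" unfolding z0_def by (rule restr_linfG[OF wl])
  define z1 where "z1 = (\<lambda>g. if g \<in> \<Gamma>' then z0 g else 0)"
  have z1l: "z1 \<in> linf (G q)"
  proof (rule linfI[of _ _ "supnorm (G q) z0"])
    fix g assume "g \<in> G q" then show "\<bar>z1 g\<bar> \<le> supnorm (G q) z0"
      using linf_le[OF z0l] supnorm_nonneg[OF neG linf_bdd[OF z0l]] by (auto simp: z1_def)
  next
    fix g assume "g \<notin> G q" then show "z1 g = 0" using linf_zero[OF z0l] by (simp add: z1_def)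
  qed
  define z2 where "z2 = (\<lambda>g. z0 g - z1 g)"
  have z2l: "z2 \<in> linf (G q)" unfolding z2_def by (rule linf_diff[OF z0l z1l])
  have z20: "\<And>\<xi>. \<xi> \<in> \<Gamma>' \<Longrightarrow> z2 \<xi> = 0" by (simp add: z2_def z1_def)
  define u where "u = I q z1"
  obtain a where a: "I q z1 = lc (G q) a" using expand[OF z1l] by blast
  have uFS: "u \<in> FS" unfolding FS_def u_def a using finG[of q] G_sub[of q] by (intro CollectI exI[of _ "G q"] exI[of _ a]) simp
  have "z0 = (\<lambda>g. z1 g + z2 g)" by (simp add: z2_def)
  then have Iz0: "I q z0 = (\<lambda>g. I q z1 g + I q z2 g)" using I_add[OF z1l z2l] by simp
  have "I q z0 = w" unfolding z0_def wF using P_lc[OF F(1) q] by (simp add: P_def)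
  have uw: "\<forall>g\<in>\<Gamma>'. u g = w g"
  proof
    fix g assume g: "g \<in> \<Gamma>'"
    have "w g = I q z0 g" using \<open>I q z0 = w\<close> by simp
    also have "\<dots> = I q z1 g + I q z2 g" using Iz0 by simp
    finally have "w g = I q z1 g + I q z2 g" .
    then show "u g = w g" using RZ[OF z2l z20 g] by (simp add: u_def)
  qed
  have n1: "supnorm (G q) z1 \<le> s"
  proof (rule supnorm_le[OF neG])
    fix g assume g: "g \<in> G q"
    show "\<bar>z1 g\<bar> \<le> s"
    proof (cases "g \<in> \<Gamma>'")
      case True
      have "\<bar>restr w \<Gamma>' g\<bar> \<le> s" unfolding s_def by (rule linf_le[OF Rl True])
      then show ?thesis using True g by (simp add: z1_def z0_def restr_def)
    next
      case False then show ?thesis using s0 by (simp add: z1_def)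
    qed
  qed
  have "supnorm \<Gamma> u \<le> CC * supnorm (G q) z1" unfolding u_def by (rule I_bound[OF z1l])
  also have "\<dots> \<le> CC * s" using n1 CC_ge1 by (simp add: mult_left_mono)
  finally show ?thesis using uFS uw s_def by blast
qed

end



lemma geo_tail:
  fixes V :: "nat \<Rightarrow> real"
  assumes b: "\<And>n. \<bar>V n\<bar> \<le> K * (1/2)^n"
  shows "summable V" and "\<bar>\<Sum>n. V (n + N)\<bar> \<le> 2 * K * (1/2)^N"
proof -
  have sg: "summable (\<lambda>n. K * (1/2::real)^n)" by (rule summable_mult) (simp add: summable_geometric)
  show "summable V" by (rule summable_comparison_test'[OF sg]) (use b in simp)
  have sgN: "summable (\<lambda>n. K * (1/2::real)^(n + N))" by (rule summable_ignore_initial_segment[OF sg])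
  have sa: "summable (\<lambda>n. \<bar>V (n + N)\<bar>)" by (rule summable_comparison_test'[OF sgN]) (use b in simp)
  have "\<bar>\<Sum>n. V (n + N)\<bar> \<le> (\<Sum>n. \<bar>V (n + N)\<bar>)" by (rule summable_rabs[OF sa])
  also have "\<dots> \<le> (\<Sum>n. K * (1/2::real)^(n + N))" by (rule suminf_le[OF _ sa sgN]) (use b in simp)
  also have "(\<Sum>n. K * (1/2::real)^(n + N)) = (\<Sum>n. (K * (1/2)^N) * (1/2::real)^n)"
    by (simp add: power_add mult_ac)
  also have "\<dots> = (K * (1/2)^N) * (\<Sum>n. (1/2::real)^n)" by (rule suminf_mult) (simp add: summable_geometric)
  also have "(\<Sum>n. (1/2::real)^n) = 2" using suminf_geometric[of "1/2::real"] by simp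
  finally show "\<bar>\<Sum>n. V (n + N)\<bar> \<le> 2 * K * (1/2)^N" by simp
qed

lemma small_pow: "(e::real) > 0 \<Longrightarrow> \<exists>N. (1/2::real)^N < e"
  using real_arch_pow_inv[of e "1/2"] by simp

context bdl begin

lemma claim1b: "x' \<in> bd_space G' I' \<Longrightarrow> \<exists>x\<in>bd_space G I. restr x \<Gamma>' = x'"
proof -
  assume x': "x' \<in> bd_space G' I'"
  then have x'l: "x' \<in> linf \<Gamma>'" and ap: "\<forall>e>0. \<exists>F c. finite F \<and> F \<subseteq> \<Gamma>' \<and>
       supnorm \<Gamma>' (\<lambda>g. x' g - (\<Sum>i\<in>F. c i * bd_d G' I' i g)) < e"
    unfolding Xsub_unfold cspan_def by simp_all
  have "\<forall>n. \<exists>w. w \<in> FS \<and> supnorm \<Gamma>' (\<lambda>g. x' g - restr w \<Gamma>' g) < (1/2)^n"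
  proof
    fix n :: nat
    have "(1/2::real)^n > 0" by simp
    then obtain F c where F: "finite F" "F \<subseteq> \<Gamma>'" and
      s: "supnorm \<Gamma>' (\<lambda>g. x' g - (\<Sum>i\<in>F. c i * bd_d G' I' i g)) < (1/2)^n"
      using ap by blast
    have "lc F c \<in> FS" unfolding FS_def using F sd_sub by (intro CollectI exI[of _ F] exI[of _ c]) auto
    moreover have "supnorm \<Gamma>' (\<lambda>g. x' g - restr (lc F c) \<Gamma>' g) < (1/2)^n"
      using s lcR[OF F(2), of c] by (simp add: fun_eq_iff)
    ultimately show "\<exists>w. w \<in> FS \<and> supnorm \<Gamma>' (\<lambda>g. x' g - restr w \<Gamma>' g) < (1/2)^n" by blast
  qed
  from choice[OF this] obtain W where W: "\<And>n. W n \<in> FS" "\<And>n. supnorm \<Gamma>' (\<lambda>g. x' g - restr (W n) \<Gamma>' g) < (1/2)^n"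
    by blast
  have Wpt: "\<bar>x' g - W n g\<bar> < (1/2)^n" if g: "g \<in> \<Gamma>'" for g n
  proof -
    have dl: "(\<lambda>g. x' g - restr (W n) \<Gamma>' g) \<in> linf \<Gamma>'"
      by (rule linf_diff[OF x'l linf_restr[OF FS_linf[OF W(1)] sd_sub]])
    have "\<bar>x' g - restr (W n) \<Gamma>' g\<bar> \<le> supnorm \<Gamma>' (\<lambda>g. x' g - restr (W n) \<Gamma>' g)" by (rule linf_le[OF dl g])
    then show ?thesis using W(2)[of n] g by (simp add: restr_def)
  qed
  have "\<forall>w. \<exists>u. w \<in> FS \<longrightarrow> u \<in> FS \<and> (\<forall>g\<in>\<Gamma>'. u g = w g) \<and> supnorm \<Gamma> u \<le> CC * supnorm \<Gamma>' (restr w \<Gamma>')"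
    using LIFT by blast
  from choice[OF this] obtain lift where lift: "\<And>w. w \<in> FS \<Longrightarrow> lift w \<in> FS \<and> (\<forall>g\<in>\<Gamma>'. lift w g = w g) \<and>
      supnorm \<Gamma> (lift w) \<le> CC * supnorm \<Gamma>' (restr w \<Gamma>')" by blast
  define v0 where "v0 = lift (W 0)"
  define Dn where "Dn n = (\<lambda>g. W (Suc n) g - W n g)" for n
  define V where "V n = lift (Dn n)" for n
  have DFS: "Dn n \<in> FS" for n unfolding Dn_def by (rule FS_diff[OF W(1) W(1)])
  have v0FS: "v0 \<in> FS" and v0pt: "\<And>g. g \<in> \<Gamma>' \<Longrightarrow> v0 g = W 0 g" using lift[OF W(1)] by (auto simp: v0_def)
  have VFS: "V n \<in> FS" for n using lift[OF DFS] by (simp add: V_def)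
  have Vpt: "V n g = W (Suc n) g - W n g" if "g \<in> \<Gamma>'" for n g using lift[OF DFS] that by (simp add: V_def Dn_def)
  define K where "K = 2 * CC"
  have K0: "K \<ge> 0" using CC_ge1 by (simp add: K_def)
  have Vb: "\<bar>V n g\<bar> \<le> K * (1/2)^n" for n g
  proof -
    have sD: "supnorm \<Gamma>' (restr (Dn n) \<Gamma>') \<le> 2 * (1/2)^n"
    proof (rule supnorm_le[OF Gp_ne])
      fix g assume g: "g \<in> \<Gamma>'"
      have "\<bar>W (Suc n) g - W n g\<bar> \<le> \<bar>x' g - W (Suc n) g\<bar> + \<bar>x' g - W n g\<bar>" by linarith
      also have "\<dots> \<le> (1/2)^(Suc n) + (1/2)^n" using Wpt[OF g, of n] Wpt[OF g, of "Suc n"] by linarith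
      also have "\<dots> \<le> 2 * (1/2)^n" by simp
      finally show "\<bar>restr (Dn n) \<Gamma>' g\<bar> \<le> 2 * (1/2)^n" using g by (simp add: restr_def Dn_def)
    qed
    have "supnorm \<Gamma> (V n) \<le> CC * supnorm \<Gamma>' (restr (Dn n) \<Gamma>')" using lift[OF DFS] by (simp add: V_def)
    also have "\<dots> \<le> CC * (2 * (1/2)^n)" using sD CC_ge1 by (simp add: mult_left_mono)
    finally have sV: "supnorm \<Gamma> (V n) \<le> K * (1/2)^n" by (simp add: K_def)
    show ?thesis
    proof (cases "g \<in> \<Gamma>")
      case True then show ?thesis using linf_le[OF FS_linf[OF VFS[of n]] True] sV by linarith
    next
      case False then have "V n g = 0" by (rule linf_zero[OF FS_linf[OF VFS]])
      then show ?thesis using K0 by simp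
    qed
  qed
  have summ: "summable (\<lambda>n. V n g)" for g by (rule geo_tail(1)[OF Vb])
  have tail: "\<bar>\<Sum>n. V (n + N) g\<bar> \<le> 2 * K * (1/2)^N" for g N by (rule geo_tail(2)[OF Vb])
  define x where "x g = v0 g + (\<Sum>n. V n g)" for g
  define S where "S N = (\<lambda>g. v0 g + (\<Sum>n<N. V n g))" for N
  have SFS: "S N \<in> FS" for N
  proof (induction N)
    case 0
    have "S 0 = v0" by (simp add: S_def)
    then show ?case using v0FS by simp
  next
    case (Suc N)
    have "S (Suc N) = (\<lambda>g. S N g + V N g)" by (simp add: S_def fun_eq_iff)
    then show ?case using FS_add[OF Suc VFS] by simp
  qed
  have Spt: "S N g = W N g" if g: "g \<in> \<Gamma>'" for N g
  proof (induction N)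
    case 0 then show ?case using v0pt[OF g] by (simp add: S_def)
  next
    case (Suc N)
    have "S (Suc N) g = S N g + V N g" by (simp add: S_def)
    then show ?case using Suc Vpt[OF g, of N] by simp
  qed
  have xS: "\<bar>x g - S N g\<bar> \<le> 2 * K * (1/2)^N" for g N
  proof -
    have "(\<Sum>n. V n g) = (\<Sum>n. V (n + N) g) + (\<Sum>i<N. V i g)" by (rule suminf_split_initial_segment[OF summ])
    then have "x g - S N g = (\<Sum>n. V (n + N) g)" by (simp add: x_def S_def)
    then show ?thesis using tail[of N g] by simp
  qed
  have xl: "x \<in> linf \<Gamma>"
  proof (rule linfI[of _ _ "supnorm \<Gamma> v0 + 2 * K"])
    fix g assume g: "g \<in> \<Gamma>"
    have "\<bar>x g\<bar> \<le> \<bar>v0 g\<bar> + \<bar>\<Sum>n. V n g\<bar>" by (simp add: x_def abs_triangle_ineq)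
    moreover have "\<bar>v0 g\<bar> \<le> supnorm \<Gamma> v0" by (rule linf_le[OF FS_linf[OF v0FS] g])
    moreover have "\<bar>\<Sum>n. V n g\<bar> \<le> 2 * K" using tail[of 0 g] by simp
    ultimately show "\<bar>x g\<bar> \<le> supnorm \<Gamma> v0 + 2 * K" by linarith
  next
    fix g assume g: "g \<notin> \<Gamma>"
    have "v0 g = 0" by (rule linf_zero[OF FS_linf[OF v0FS] g])
    moreover have "V n g = 0" for n by (rule linf_zero[OF FS_linf[OF VFS] g])
    ultimately show "x g = 0" by (simp add: x_def)
  qed
  have xX: "x \<in> bd_space G I"
    unfolding bd_space_def cspan_def
  proof (intro CollectI conjI allI impI xl)
    fix e :: real assume e: "e > 0"
    obtain N where N: "(1/2::real)^N < e / (2 * K + 1)" using small_pow[of "e / (2 * K + 1)"] e K0 by auto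
    obtain F c where F: "finite F" "F \<subseteq> \<Gamma>" "S N = lc F c" using SFS[of N] unfolding FS_def by blast
    have "supnorm \<Gamma> (\<lambda>g. x g - (\<Sum>i\<in>F. c i * d i g)) \<le> 2 * K * (1/2)^N"
    proof (rule supnorm_le[OF Gam_ne])
      fix g assume "g \<in> \<Gamma>"
      have "(\<Sum>i\<in>F. c i * d i g) = S N g" using F(3) by (simp add: lc_def)
      then show "\<bar>x g - (\<Sum>i\<in>F. c i * d i g)\<bar> \<le> 2 * K * (1/2)^N" using xS[of g N] by simp
    qed
    also have "2 * K * (1/2)^N \<le> (2 * K + 1) * (1/2)^N" by simp
    also have "(2 * K + 1) * (1/2::real)^N < (2 * K + 1) * (e / (2 * K + 1))"
      using N K0 by (intro mult_strict_left_mono) auto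
    also have "\<dots> = e" using K0 by simp
    finally show "\<exists>F c. finite F \<and> F \<subseteq> \<Gamma> \<and> supnorm \<Gamma> (\<lambda>g. x g - (\<Sum>i\<in>F. c i * d i g)) < e"
      using F by blast
  qed
  have "restr x \<Gamma>' = x'"
  proof (rule ext)
    fix g
    show "restr x \<Gamma>' g = x' g"
    proof (cases "g \<in> \<Gamma>'")
      case False then show ?thesis using linf_zero[OF x'l False] by (simp add: restr_def)
    next
      case g: True
      have "x g = x' g"
      proof (rule ccontr)
        assume ne: "x g \<noteq> x' g"
        then have t: "\<bar>x g - x' g\<bar> > 0" by simp
        obtain N where N: "(1/2::real)^N < \<bar>x g - x' g\<bar> / (2 * K + 1)"
          using small_pow[of "\<bar>x g - x' g\<bar> / (2 * K + 1)"] t K0 by auto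
        have "\<bar>x g - x' g\<bar> \<le> \<bar>x g - S N g\<bar> + \<bar>x' g - W N g\<bar>" using Spt[OF g, of N] by linarith
        also have "\<dots> \<le> 2 * K * (1/2)^N + (1/2)^N" using xS[of g N] Wpt[OF g, of N] by linarith
        also have "\<dots> = (2 * K + 1) * (1/2)^N" by (simp add: algebra_simps)
        also have "\<dots> < (2 * K + 1) * (\<bar>x g - x' g\<bar> / (2 * K + 1))"
          using N K0 by (intro mult_strict_left_mono) auto
        also have "\<dots> = \<bar>x g - x' g\<bar>" using K0 by simp
        finally show False by simp
      qed
      then show ?thesis using g by (simp add: restr_def)
    qed
  qed
  then show ?thesis using xX by blast
qed

end

theorem proposition1p12:
  fixes G :: "nat \<Rightarrow> 'g set"
    and I :: "nat \<Rightarrow> ('g \<Rightarrow> real) \<Rightarrow> ('g \<Rightarrow> real)"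
    and \<Gamma>' :: "'g set"
  assumes "bd_data G I"
    and "self_determined G I \<Gamma>'"
  shows "(\<lambda>x. restr x \<Gamma>') ` bd_space G I = bd_space (sub_G G \<Gamma>') (sub_I G I \<Gamma>')
       \<and> {x \<in> bd_space G I. restr x \<Gamma>' = (\<lambda>_. 0)} = cspan (Gam G) (Gam G - \<Gamma>') (bd_d G I)
       \<and> (\<exists>C>0. \<forall>x\<in>bd_space G I. \<exists>y\<in>cspan (Gam G) (Gam G - \<Gamma>') (bd_d G I).
            supnorm (Gam G) (\<lambda>g. x g - y g) \<le> C * supnorm \<Gamma>' (restr x \<Gamma>'))"
proof -
  interpret bdl G I \<Gamma>' using assms by (unfold_locales)
  have c1: "(\<lambda>x. restr x \<Gamma>') ` bd_space G I = bd_space (sub_G G \<Gamma>') (sub_I G I \<Gamma>')"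
  proof
    show "(\<lambda>x. restr x \<Gamma>') ` bd_space G I \<subseteq> bd_space (sub_G G \<Gamma>') (sub_I G I \<Gamma>')"
      using claim1a by blast
  next
    show "bd_space (sub_G G \<Gamma>') (sub_I G I \<Gamma>') \<subseteq> (\<lambda>x. restr x \<Gamma>') ` bd_space G I"
    proof
      fix x' assume "x' \<in> bd_space (sub_G G \<Gamma>') (sub_I G I \<Gamma>')"
      then obtain x where "x \<in> bd_space G I" "restr x \<Gamma>' = x'" using claim1b by blast
      then show "x' \<in> (\<lambda>x. restr x \<Gamma>') ` bd_space G I" by blast
    qed
  qed
  have c2: "{x \<in> bd_space G I. restr x \<Gamma>' = (\<lambda>_. 0)} = cspan (Gam G) (Gam G - \<Gamma>') (bd_d G I)"
  proof
    show "{x \<in> bd_space G I. restr x \<Gamma>' = (\<lambda>_. 0)} \<subseteq> cspan (Gam G) (Gam G - \<Gamma>') (bd_d G I)"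
    proof
      fix x assume "x \<in> {x \<in> bd_space G I. restr x \<Gamma>' = (\<lambda>_. 0)}"
      then have x: "x \<in> bd_space G I" and r: "restr x \<Gamma>' = (\<lambda>_. 0)" by simp_all
      have "\<And>\<zeta>. \<zeta> \<in> \<Gamma>' \<Longrightarrow> x \<zeta> = 0" using r by (simp add: restr_def fun_eq_iff) metis
      then show "x \<in> cspan (Gam G) (Gam G - \<Gamma>') (bd_d G I)" by (rule ker_Y[OF x])
    qed
  next
    show "cspan (Gam G) (Gam G - \<Gamma>') (bd_d G I) \<subseteq> {x \<in> bd_space G I. restr x \<Gamma>' = (\<lambda>_. 0)}"
    proof
      fix x assume x: "x \<in> cspan (Gam G) (Gam G - \<Gamma>') (bd_d G I)"
      have "restr x \<Gamma>' = (\<lambda>_. 0)" by (rule ext) (simp add: restr_def Y_ker[OF x])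
      then show "x \<in> {x \<in> bd_space G I. restr x \<Gamma>' = (\<lambda>_. 0)}" using Y_sub_X[OF x] by simp
    qed
  qed
  show ?thesis using c1 c2 claim3 by blast
qed


end
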